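(* Let $\mathcal{H}_A,\mathcal{H}_B$ have finite dimensions and let $\rho$ be any state on $\mathcal{H}_A\otimes\mathcal{H}_B$. Then $\mathcal{D}^A_G(\rho)=\mathcal{D}^A_{h=1,p=2}(\rho)$.
   Context: Let $d=\min\{\dim\mathcal{H}_A,\dim\mathcal{H}_B\}$. Let $\{A_i\}$, $\{B_j\}$ be orthonormal bases (w.r.t. the Hilbert–Schmidt inner product $\mathrm{tr}(XY)$) of the real spaces of Hermitian operators on $\mathcal{H}_A$, $\mathcal{H}_B$, and for a state $\sigma$ let $\mathcal{C}(\sigma)_{ij}=\mathrm{tr}(\sigma\,A_i\otimes B_j)$ with singular values $\sigma_1,\ldots,\sigma_{d^2}$. Then $\mathcal{M}_{1,2}(\sigma)=(\sum_k\sigma_k^2)^{1/2}$. A projective measurement $\Pi^A$ on $A$ is given by an orthonormal basis $\{|l\rangle\}$ of $\mathcal{H}_A$ and acts by $\Pi^A[\rho]=\sum_l(|l\rangle\langle l|\otimes\mathbb{1})\rho(|l\rangle\langle l|\otimes\mathbb{1})$. Define $\mathcal{D}^A_{1,2}(\rho)=\mathcal{M}_{1,2}(\rho)^2-\max_{\Pi^A}\mathcal{M}_{1,2}(\Pi^A[\rho])^2$, the maximum over all projective measurements on $A$. The geometric quantum discord is $\mathcal{D}^A_G(\rho)=\min_\chi\|\rho-\chi\|^2$ (Hilbert–Schmidt norm), minimized over classical-quantum states $\chi=\sum_k p_k|k\rangle\langle k|\otimes\chi_k$ with $\{|k\rangle\}$ an orthonormal basis of $\mathcal{H}_A$, $(p_k)$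 a probability vector and $\chi_k$ states on $\mathcal{H}_B$. *)

theory Defs
  imports "Jordan_Normal_Form.Schur_Decomposition" "HOL-Library.Complex_Order"
begin

(* H_A = C^dA, H_B = C^dB, H_A \<otimes> H_B = C^(dA*dB) with the standard
   Kronecker identification (i,k) \<mapsto> i*dB + k. *)

definition msum :: "nat \<Rightarrow> nat \<Rightarrow> ('i \<Rightarrow> complex mat) \<Rightarrow> 'i set \<Rightarrow> complex mat" where
  "msum n m f I = mat n m (\<lambda>(i, j). \<Sum>k\<in>I. f k $$ (i, j))"

definition mtrace :: "complex mat \<Rightarrow> complex" where
  "mtrace X = (\<Sum>i<dim_row X. X $$ (i, i))"

definition hermitian_mat :: "nat \<Rightarrow> complex mat \<Rightarrow> bool" where
  "hermitian_mat n X \<longleftrightarrow> X \<in> carrier_mat n n \<and> mat_adjoint X = X"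

definition is_state :: "nat \<Rightarrow> complex mat \<Rightarrow> bool" where
  "is_state n \<sigma> \<longleftrightarrow> hermitian_mat n \<sigma>
     \<and> (\<forall>v \<in> carrier_vec n. 0 \<le> (\<sigma> *\<^sub>v v) \<bullet>c v)
     \<and> mtrace \<sigma> = 1"

definition tensor_mat :: "complex mat \<Rightarrow> complex mat \<Rightarrow> complex mat" where
  "tensor_mat X Y = mat (dim_row X * dim_row Y) (dim_col X * dim_col Y)
     (\<lambda>(i, j). X $$ (i div dim_row Y, j div dim_col Y) * Y $$ (i mod dim_row Y, j mod dim_col Y))"

definition herm_onb :: "nat \<Rightarrow> (nat \<Rightarrow> complex mat) \<Rightarrow> bool" where
  "herm_onb n As \<longleftrightarrow>
     (\<forall>i < n^2. hermitian_mat n (As i))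
   \<and> (\<forall>i < n^2. \<forall>j < n^2. mtrace (As i * As j) = (if i = j then 1 else 0))
   \<and> (\<forall>X. hermitian_mat n X \<longrightarrow>
        (\<exists>c :: nat \<Rightarrow> real. X = msum n n (\<lambda>i. complex_of_real (c i) \<cdot>\<^sub>m As i) {..<n^2}))"

definition corr_entry :: "(nat \<Rightarrow> complex mat) \<Rightarrow> (nat \<Rightarrow> complex mat) \<Rightarrow> complex mat \<Rightarrow> nat \<Rightarrow> nat \<Rightarrow> complex" where
  "corr_entry As Bs \<sigma> i j = mtrace (\<sigma> * tensor_mat (As i) (Bs j))"

(* M_{1,2}(\<sigma>) = (\<Sum>_k \<sigma>_k^2)^{1/2}: the Schatten-2 (Hilbert-Schmidt/Frobenius)
   norm of the dA^2 x dB^2 correlation matrix, i.e. the square root of the sum of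
   squared moduli of its entries. *)
definition M12 :: "nat \<Rightarrow> nat \<Rightarrow> (nat \<Rightarrow> complex mat) \<Rightarrow> (nat \<Rightarrow> complex mat) \<Rightarrow> complex mat \<Rightarrow> real" where
  "M12 dA dB As Bs \<sigma> = sqrt (\<Sum>i<dA^2. \<Sum>j<dB^2. (cmod (corr_entry As Bs \<sigma> i j))^2)"

definition vec_onb :: "nat \<Rightarrow> (nat \<Rightarrow> complex vec) \<Rightarrow> bool" where
  "vec_onb n u \<longleftrightarrow> (\<forall>l < n. u l \<in> carrier_vec n)
     \<and> (\<forall>l < n. \<forall>m < n. u l \<bullet>c u m = (if l = m then 1 else 0))"

definition ket_bra :: "complex vec \<Rightarrow> complex mat" where
  "ket_bra v = mat (dim_vec v) (dim_vec v) (\<lambda>(i, j). v $ i * cnj (v $ j))"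

definition proj_meas_A :: "nat \<Rightarrow> nat \<Rightarrow> (nat \<Rightarrow> complex vec) \<Rightarrow> complex mat \<Rightarrow> complex mat" where
  "proj_meas_A dA dB u \<rho> = msum (dA * dB) (dA * dB)
     (\<lambda>l. tensor_mat (ket_bra (u l)) (1\<^sub>m dB) * \<rho> * tensor_mat (ket_bra (u l)) (1\<^sub>m dB)) {..<dA}"

definition discord12_A :: "nat \<Rightarrow> nat \<Rightarrow> (nat \<Rightarrow> complex mat) \<Rightarrow> (nat \<Rightarrow> complex mat) \<Rightarrow> complex mat \<Rightarrow> real" where
  "discord12_A dA dB As Bs \<rho> = (M12 dA dB As Bs \<rho>)^2
     - Sup {(M12 dA dB As Bs (proj_meas_A dA dB u \<rho>))^2 | u. vec_onb dA u}"

definition hs_norm_sq :: "complex mat \<Rightarrow> real" where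
  "hs_norm_sq X = Re (mtrace (mat_adjoint X * X))"

definition cq_states :: "nat \<Rightarrow> nat \<Rightarrow> complex mat set" where
  "cq_states dA dB = {msum (dA * dB) (dA * dB)
        (\<lambda>k. complex_of_real (p k) \<cdot>\<^sub>m tensor_mat (ket_bra (u k)) (\<chi> k)) {..<dA}
      | u p \<chi>. vec_onb dA u \<and> (\<forall>k < dA. 0 \<le> p k) \<and> (\<Sum>k<dA. p k) = 1
             \<and> (\<forall>k < dA. is_state dB (\<chi> k))}"

definition geometric_discord_A :: "nat \<Rightarrow> nat \<Rightarrow> complex mat \<Rightarrow> real" where
  "geometric_discord_A dA dB \<rho> = Inf {hs_norm_sq (\<rho> - \<chi>) | \<chi>. \<chi> \<in> cq_states dA dB}"

end

theory Submission
  imports Defs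
begin

lemma adj_dim[simp]: "dim_row (mat_adjoint X) = dim_col X" "dim_col (mat_adjoint X) = dim_row X"
  unfolding mat_adjoint_def by auto

lemma adj_index[simp]: "i < dim_col X \<Longrightarrow> j < dim_row X \<Longrightarrow> mat_adjoint X $$ (i,j) = cnj (X $$ (j,i))"
  unfolding mat_adjoint_def mat_of_rows_def by (auto simp: conjugate_complex_def)

lemma adj_carrier[simp]: "X \<in> carrier_mat n m \<Longrightarrow> mat_adjoint X \<in> carrier_mat m n"
  unfolding carrier_mat_def by simp

lemma adj_adj[simp]: "mat_adjoint (mat_adjoint (X::complex mat)) = X"
  by (rule eq_matI) auto

lemma adj_mult: "(A::complex mat) \<in> carrier_mat n k \<Longrightarrow> B \<in> carrier_mat k m \<Longrightarrow> mat_adjoint (A * B) = mat_adjoint B * mat_adjoint A"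
  by (rule eq_matI) (auto simp: scalar_prod_def mult.commute)

lemma adj_minus: "(A::complex mat) \<in> carrier_mat n m \<Longrightarrow> B \<in> carrier_mat n m \<Longrightarrow> mat_adjoint (A - B) = mat_adjoint A - mat_adjoint B"
  by (rule eq_matI) auto

lemma adj_smult: "mat_adjoint (c \<cdot>\<^sub>m (A::complex mat)) = cnj c \<cdot>\<^sub>m mat_adjoint A"
  by (rule eq_matI) auto

lemma adj_one[simp]: "mat_adjoint (1\<^sub>m n) = (1\<^sub>m n :: complex mat)"
  by (rule eq_matI) auto

lemma mtrace_comm: assumes "A \<in> carrier_mat n m" "B \<in> carrier_mat m n" shows "mtrace (A * B) = mtrace (B * A)"
proof -
  have "mtrace (A * B) = (\<Sum>i<n. \<Sum>k<m. A $$ (i,k) * B $$ (k,i))"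
    using assms unfolding mtrace_def by (auto simp: scalar_prod_def atLeast0LessThan intro!: sum.cong)
  also have "\<dots> = (\<Sum>k<m. \<Sum>i<n. B $$ (k,i) * A $$ (i,k))"
    by (subst sum.swap) (simp add: mult.commute)
  also have "\<dots> = mtrace (B * A)"
    using assms unfolding mtrace_def by (auto simp: scalar_prod_def atLeast0LessThan intro!: sum.cong)
  finally show ?thesis .
qed

lemma msum_carrier[simp]: "msum n m f I \<in> carrier_mat n m" "dim_row (msum n m f I) = n" "dim_col (msum n m f I) = m"
  unfolding msum_def by auto

lemma msum_index[simp]: "i < n \<Longrightarrow> j < m \<Longrightarrow> msum n m f I $$ (i,j) = (\<Sum>k\<in>I. f k $$ (i,j))"
  unfolding msum_def by auto

lemma msum_mult_right: assumes "\<And>k. k \<in> I \<Longrightarrow> f k \<in> carrier_mat n p" "B \<in> carrier_mat p m"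
  shows "msum n p f I * B = msum n m (\<lambda>k. f k * B) I"
proof -
  have d: "\<And>k. k \<in> I \<Longrightarrow> dim_row (f k) = n \<and> dim_col (f k) = p" using assms(1) by auto
  show ?thesis
  using assms d by (intro eq_matI) (auto simp: scalar_prod_def sum_distrib_right sum.swap[of _ I] intro!: sum.cong)
qed

lemma msum_mult_left: assumes "\<And>k. k \<in> I \<Longrightarrow> f k \<in> carrier_mat p m" "B \<in> carrier_mat n p"
  shows "B * msum p m f I = msum n m (\<lambda>k. B * f k) I"
proof -
  have d: "\<And>k. k \<in> I \<Longrightarrow> dim_row (f k) = p \<and> dim_col (f k) = m" using assms(1) by auto
  show ?thesis
  using assms d by (intro eq_matI) (auto simp: scalar_prod_def sum_distrib_left sum.swap[of _ I] intro!: sum.cong)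
qed

lemma msum_minus: assumes "\<And>k. k \<in> I \<Longrightarrow> f k \<in> carrier_mat n m" "\<And>k. k \<in> I \<Longrightarrow> g k \<in> carrier_mat n m"
  shows "msum n m f I - msum n m g I = msum n m (\<lambda>k. f k - g k) I"
proof -
  have d: "\<And>k. k \<in> I \<Longrightarrow> dim_row (f k) = n \<and> dim_col (f k) = m \<and> dim_row (g k) = n \<and> dim_col (g k) = m" using assms by auto
  show ?thesis
  using assms d by (intro eq_matI) (auto simp: sum_subtractf[symmetric] intro!: sum.cong)
qed

lemma msum_adj: assumes "\<And>k. k \<in> I \<Longrightarrow> f k \<in> carrier_mat n m"
  shows "mat_adjoint (msum n m f I) = msum m n (\<lambda>k. mat_adjoint (f k)) I"
proof -
  have d: "\<And>k. k \<in> I \<Longrightarrow> dim_row (f k) = n \<and> dim_col (f k) = m" using assms(1) by auto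
  show ?thesis
  using assms d by (intro eq_matI) (auto intro!: sum.cong)
qed

lemma msum_trace: assumes "\<And>k. k \<in> I \<Longrightarrow> f k \<in> carrier_mat n n"
  shows "mtrace (msum n n f I) = (\<Sum>k\<in>I. mtrace (f k))"
proof -
  have "mtrace (msum n n f I) = (\<Sum>i<n. \<Sum>k\<in>I. f k $$ (i,i))"
    unfolding mtrace_def by simp
  also have "\<dots> = (\<Sum>k\<in>I. \<Sum>i<n. f k $$ (i,i))"
    by (rule sum.swap)
  also have "\<dots> = (\<Sum>k\<in>I. mtrace (f k))"
    unfolding mtrace_def using assms by (intro sum.cong) auto
  finally show ?thesis .
qed

lemma msum_cong: "(\<And>k. k \<in> I \<Longrightarrow> f k = g k) \<Longrightarrow> msum n m f I = msum n m g I"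
  unfolding msum_def by (auto intro!: cong_mat sum.cong)

lemma msum_delta: assumes "finite I" "l \<in> I" "f l \<in> carrier_mat n m"
  shows "msum n m (\<lambda>k. if k = l then f k else 0\<^sub>m n m) I = f l"
proof (rule eq_matI)
  fix i j assume ij: "i < dim_row (f l)" "j < dim_col (f l)"
  have e: "\<And>k. (if k = l then f k else 0\<^sub>m n m) $$ (i,j) = (if k = l then f l $$ (i,j) else 0)"
    using ij assms by auto
  have "msum n m (\<lambda>k. if k = l then f k else 0\<^sub>m n m) I $$ (i, j)
     = (\<Sum>k\<in>I. if k = l then f l $$ (i,j) else 0)"
  proof -
    have "i < n" "j < m" using ij assms by auto
    then show ?thesis by (simp only: msum_index e)
  qed
  also have "\<dots> = f l $$ (i,j)" using assms by simp
  finally show "msum n m (\<lambda>k. if k = l then f k else 0\<^sub>m n m) I $$ (i, j) = f l $$ (i, j)" .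
qed (use assms in \<open>simp_all add: carrier_matD\<close>)

lemma lt_mult_aux: "a < (m::nat) \<Longrightarrow> b < n \<Longrightarrow> a * n + b < m * n"
proof -
  assume "a < m" "b < n"
  then have "a * n + b < a * n + n" by simp
  also have "\<dots> = Suc a * n" by simp
  also have "\<dots> \<le> m * n" using \<open>a < m\<close> by (intro mult_le_mono1) simp
  finally show ?thesis .
qed

lemma sum_split_div_mod: "(\<Sum>k<(m::nat)*n. f k) = (\<Sum>a<m. \<Sum>b<n. f (a*n+b))"
proof -
  have bij: "bij_betw (\<lambda>(a,b). a*n+b) ({..<m}\<times>{..<n}) {..<m*n}"
  proof (rule bij_betwI[where g="\<lambda>k. (k div n, k mod n)"])
    show "(\<lambda>(a, b). a * n + b) \<in> {..<m} \<times> {..<n} \<rightarrow> {..<m * n}"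
      using lt_mult_aux by auto
    show "(\<lambda>k. (k div n, k mod n)) \<in> {..<m * n} \<rightarrow> {..<m} \<times> {..<n}"
      by (auto simp: less_mult_imp_div_less) (metis mod_less_divisor mult_0_right not_less_zero gr0I)
  qed auto
  have "(\<Sum>k<m*n. f k) = (\<Sum>p\<in>{..<m}\<times>{..<n}. f ((\<lambda>(a,b). a*n+b) p))"
    using sum.reindex_bij_betw[OF bij, of f] by simp
  also have "\<dots> = (\<Sum>a<m. \<Sum>b<n. f (a*n+b))"
    by (simp add: sum.cartesian_product split_beta)
  finally show ?thesis .
qed

lemma tensor_dim[simp]: "dim_row (tensor_mat X Y) = dim_row X * dim_row Y"
  "dim_col (tensor_mat X Y) = dim_col X * dim_col Y"
  unfolding tensor_mat_def by auto

lemma tensor_carrier[simp]: "X \<in> carrier_mat n1 m1 \<Longrightarrow> Y \<in> carrier_mat n2 m2 \<Longrightarrow>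
  tensor_mat X Y \<in> carrier_mat (n1*n2) (m1*m2)"
  unfolding carrier_mat_def by simp

lemma tensor_index[simp]: "i < dim_row X * dim_row Y \<Longrightarrow> j < dim_col X * dim_col Y \<Longrightarrow>
  tensor_mat X Y $$ (i,j) = X $$ (i div dim_row Y, j div dim_col Y) * Y $$ (i mod dim_row Y, j mod dim_col Y)"
  unfolding tensor_mat_def by simp

lemma tensor_mult: assumes X: "X \<in> carrier_mat n1 k1" and Y: "Y \<in> carrier_mat n2 k2"
  and Z: "Z \<in> carrier_mat k1 m1" and W: "W \<in> carrier_mat k2 m2"
  shows "tensor_mat X Y * tensor_mat Z W = tensor_mat (X * Z) (Y * W)"
proof (rule eq_matI)
  fix i j assume i: "i < dim_row (tensor_mat (X * Z) (Y * W))" and j: "j < dim_col (tensor_mat (X * Z) (Y * W))"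
  have i': "i < n1 * n2" and j': "j < m1 * m2" using i j X Y Z W by auto
  have id: "i div n2 < n1" "j div m2 < m1" using i' j' by (auto simp: less_mult_imp_div_less)
  have n2: "n2 > 0" "m2 > 0" using i' j' by (auto intro!: gr0I)
  have im: "i mod n2 < n2" "j mod m2 < m2" using n2 by auto
  have "(tensor_mat X Y * tensor_mat Z W) $$ (i,j)
     = (\<Sum>t<k1*k2. tensor_mat X Y $$ (i,t) * tensor_mat Z W $$ (t,j))"
    using i' j' X Y Z W by (simp add: scalar_prod_def atLeast0LessThan)
  also have "\<dots> = (\<Sum>t<k1*k2. (X $$ (i div n2, t div k2) * Y $$ (i mod n2, t mod k2)) *
       (Z $$ (t div k2, j div m2) * W $$ (t mod k2, j mod m2)))"
    using i' j' X Y Z W by (intro sum.cong) auto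
  also have "\<dots> = (\<Sum>a<k1. \<Sum>b<k2. (X $$ (i div n2, a) * Y $$ (i mod n2, b)) *
       (Z $$ (a, j div m2) * W $$ (b, j mod m2)))"
    by (subst sum_split_div_mod) (intro sum.cong refl, simp)
  also have "\<dots> = (\<Sum>a<k1. X $$ (i div n2, a) * Z $$ (a, j div m2)) * (\<Sum>b<k2. Y $$ (i mod n2, b) * W $$ (b, j mod m2))"
    unfolding sum_product by (rule sum.cong[OF refl], rule sum.cong[OF refl]) (simp add: mult_ac)
  also have "\<dots> = tensor_mat (X * Z) (Y * W) $$ (i,j)"
    using i' j' id im X Y Z W by (simp add: scalar_prod_def atLeast0LessThan)
  finally show "(tensor_mat X Y * tensor_mat Z W) $$ (i,j) = tensor_mat (X * Z) (Y * W) $$ (i,j)" .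
qed (use X Y Z W in auto)

lemma tensor_adj: "mat_adjoint (tensor_mat X Y) = tensor_mat (mat_adjoint X) (mat_adjoint Y)"
proof (rule eq_matI)
  fix i j assume i: "i < dim_row (tensor_mat (mat_adjoint X) (mat_adjoint Y))"
    and j: "j < dim_col (tensor_mat (mat_adjoint X) (mat_adjoint Y))"
  have i': "i < dim_col X * dim_col Y" and j': "j < dim_row X * dim_row Y" using i j by auto
  have "dim_col Y > 0" "dim_row Y > 0" using i' j' by (auto intro!: gr0I)
  then show "mat_adjoint (tensor_mat X Y) $$ (i,j) = tensor_mat (mat_adjoint X) (mat_adjoint Y) $$ (i,j)"
    using i' j' by (simp add: less_mult_imp_div_less)
qed auto

lemma tensor_smult: "c \<cdot>\<^sub>m tensor_mat X Y = tensor_mat X (c \<cdot>\<^sub>m Y)"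
proof (rule eq_matI)
  fix i j assume "i < dim_row (tensor_mat X (c \<cdot>\<^sub>m Y))" "j < dim_col (tensor_mat X (c \<cdot>\<^sub>m Y))"
  then have i': "i < dim_row X * dim_row Y" and j': "j < dim_col X * dim_col Y" by auto
  have "dim_col Y > 0" "dim_row Y > 0" using i' j' by (auto intro!: gr0I)
  then show "(c \<cdot>\<^sub>m tensor_mat X Y) $$ (i,j) = tensor_mat X (c \<cdot>\<^sub>m Y) $$ (i,j)"
    using i' j' by simp
qed auto

lemma tensor_one: "tensor_mat (1\<^sub>m a) (1\<^sub>m b) = 1\<^sub>m (a*b)"
proof (rule eq_matI)
  fix i j assume "i < dim_row (1\<^sub>m (a*b) :: complex mat)" "j < dim_col (1\<^sub>m (a*b) :: complex mat)"
  then have i: "i < a*b" "j < a*b" by auto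
  then have "b > 0" by (auto intro!: gr0I)
  have "(i div b = j div b \<and> i mod b = j mod b) \<longleftrightarrow> i = j"
    by (metis div_mult_mod_eq)
  then show "tensor_mat (1\<^sub>m a) (1\<^sub>m b) $$ (i, j) = 1\<^sub>m (a * b) $$ (i, j)"
    using i \<open>b > 0\<close> by (auto simp: less_mult_imp_div_less)
qed auto

lemma tensor_msum_left: assumes "\<And>k. k \<in> I \<Longrightarrow> f k \<in> carrier_mat n1 m1" "Y \<in> carrier_mat n2 m2"
  shows "msum (n1*n2) (m1*m2) (\<lambda>k. tensor_mat (f k) Y) I = tensor_mat (msum n1 m1 f I) Y"
proof (rule eq_matI)
  fix i j assume "i < dim_row (tensor_mat (msum n1 m1 f I) Y)" "j < dim_col (tensor_mat (msum n1 m1 f I) Y)"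
  then have i: "i < n1*n2" "j < m1*m2" using assms by auto
  have d: "\<And>k. k \<in> I \<Longrightarrow> dim_row (f k) = n1 \<and> dim_col (f k) = m1" using assms by auto
  show "msum (n1*n2) (m1*m2) (\<lambda>k. tensor_mat (f k) Y) I $$ (i,j) = tensor_mat (msum n1 m1 f I) Y $$ (i,j)"
    using i assms d by (auto simp: less_mult_imp_div_less sum_distrib_right intro!: sum.cong)
qed (use assms in auto)

lemma ket_bra_dim[simp]: "dim_row (ket_bra v) = dim_vec v" "dim_col (ket_bra v) = dim_vec v"
  unfolding ket_bra_def by auto

lemma ket_bra_carrier[simp]: "v \<in> carrier_vec n \<Longrightarrow> ket_bra v \<in> carrier_mat n n"
  unfolding carrier_mat_def carrier_vec_def by simp

lemma ket_bra_index[simp]: "i < dim_vec v \<Longrightarrow> j < dim_vec v \<Longrightarrow> ket_bra v $$ (i,j) = v $ i * cnj (v $ j)"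
  unfolding ket_bra_def by simp

lemma ket_bra_adj: "mat_adjoint (ket_bra v) = ket_bra v"
  by (rule eq_matI) auto

lemma ket_bra_mult: assumes "v \<in> carrier_vec n" "w \<in> carrier_vec n"
  shows "ket_bra v * ket_bra w = (w \<bullet>c v) \<cdot>\<^sub>m mat n n (\<lambda>(i,j). v $ i * cnj (w $ j))"
proof (rule eq_matI)
  fix i j assume "i < dim_row ((w \<bullet>c v) \<cdot>\<^sub>m mat n n (\<lambda>(i,j). v $ i * cnj (w $ j)))"
     "j < dim_col ((w \<bullet>c v) \<cdot>\<^sub>m mat n n (\<lambda>(i,j). v $ i * cnj (w $ j)))"
  then have ij: "i < n" "j < n" by auto
  have "(ket_bra v * ket_bra w) $$ (i,j) = (\<Sum>t<n. v $ i * cnj (v $ t) * (w $ t * cnj (w $ j)))"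
    using ij assms by (auto simp: scalar_prod_def atLeast0LessThan intro!: sum.cong)
  also have "\<dots> = (\<Sum>t<n. w $ t * cnj (v $ t)) * (v $ i * cnj (w $ j))"
    unfolding sum_distrib_right by (rule sum.cong[OF refl]) (simp add: mult_ac)
  also have "\<dots> = ((w \<bullet>c v) \<cdot>\<^sub>m mat n n (\<lambda>(i,j). v $ i * cnj (w $ j))) $$ (i,j)"
    using ij assms by (simp add: scalar_prod_def atLeast0LessThan conjugate_complex_def)
  finally show "(ket_bra v * ket_bra w) $$ (i,j) = ((w \<bullet>c v) \<cdot>\<^sub>m mat n n (\<lambda>(i,j). v $ i * cnj (w $ j))) $$ (i,j)" .
qed (use assms in auto)

lemma ket_bra_onb: assumes "vec_onb n u" "l < n" "m < n"
  shows "ket_bra (u l) * ket_bra (u m) = (if l = m then ket_bra (u l) else 0\<^sub>m n n)"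
proof -
  have c: "u l \<in> carrier_vec n" "u m \<in> carrier_vec n" using assms unfolding vec_onb_def by auto
  have o: "u m \<bullet>c u l = (if m = l then 1 else 0)" using assms unfolding vec_onb_def by auto
  show ?thesis unfolding ket_bra_mult[OF c] o
    using c by (auto intro!: eq_matI)
qed

lemma sum4_swap: "(\<Sum>a\<in>A. \<Sum>b\<in>B. \<Sum>c\<in>C. \<Sum>d\<in>D. g a b c d) = (\<Sum>c\<in>C. \<Sum>d\<in>D. \<Sum>a\<in>A. \<Sum>b\<in>B. g a b c d)"
proof -
  have "(\<Sum>a\<in>A. \<Sum>b\<in>B. \<Sum>c\<in>C. \<Sum>d\<in>D. g a b c d) = (\<Sum>a\<in>A. \<Sum>c\<in>C. \<Sum>b\<in>B. \<Sum>d\<in>D. g a b c d)"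
    by (rule sum.cong[OF refl], rule sum.swap)
  also have "\<dots> = (\<Sum>a\<in>A. \<Sum>c\<in>C. \<Sum>d\<in>D. \<Sum>b\<in>B. g a b c d)"
    by (rule sum.cong[OF refl], rule sum.cong[OF refl], rule sum.swap)
  also have "\<dots> = (\<Sum>c\<in>C. \<Sum>a\<in>A. \<Sum>d\<in>D. \<Sum>b\<in>B. g a b c d)"
    by (rule sum.swap)
  also have "\<dots> = (\<Sum>c\<in>C. \<Sum>d\<in>D. \<Sum>a\<in>A. \<Sum>b\<in>B. g a b c d)"
    by (rule sum.cong[OF refl], rule sum.swap)
  finally show ?thesis .
qed

definition frob :: "nat \<Rightarrow> complex mat \<Rightarrow> real" where
  "frob N X = (\<Sum>x<N. \<Sum>y<N. (cmod (X $$ (x,y)))^2)"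

lemma mtrace_mult_expand: assumes "X \<in> carrier_mat n n" "Y \<in> carrier_mat n n"
  shows "mtrace (X * Y) = (\<Sum>r<n. \<Sum>s<n. X $$ (r,s) * Y $$ (s,r))"
  using assms unfolding mtrace_def by (auto simp: scalar_prod_def atLeast0LessThan intro!: sum.cong)

lemma hs_frob: assumes "X \<in> carrier_mat N N" shows "hs_norm_sq X = frob N X"
proof -
  have "mtrace (mat_adjoint X * X) = (\<Sum>r<N. \<Sum>s<N. cnj (X $$ (s,r)) * X $$ (s,r))"
    using assms by (subst mtrace_mult_expand[of _ N]) (auto intro!: sum.cong)
  also have "\<dots> = (\<Sum>r<N. \<Sum>s<N. complex_of_real ((cmod (X $$ (s,r)))^2))"
    by (intro sum.cong refl) (metis complex_norm_square mult.commute)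
  also have "\<dots> = complex_of_real (\<Sum>s<N. \<Sum>r<N. (cmod (X $$ (s,r)))^2)"
    by (subst sum.swap) simp
  finally show ?thesis unfolding hs_norm_sq_def frob_def by simp
qed

lemma frob_nonneg: "frob N X \<ge> 0"
  unfolding frob_def by (intro sum_nonneg) auto

lemma herm_expand: assumes onb: "herm_onb n As" and H: "hermitian_mat n H" and pq: "p < n" "q < n"
  shows "H $$ (p,q) = (\<Sum>i<n^2. (\<Sum>r<n. \<Sum>s<n. H $$ (r,s) * As i $$ (s,r)) * As i $$ (p,q))"
proof -
  have Ac: "\<And>i. i < n^2 \<Longrightarrow> As i \<in> carrier_mat n n" using onb unfolding herm_onb_def hermitian_mat_def by auto
  have orth: "\<And>i j. i < n^2 \<Longrightarrow> j < n^2 \<Longrightarrow> mtrace (As i * As j) = (if i = j then 1 else 0)"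
    using onb unfolding herm_onb_def by auto
  obtain c where c: "H = msum n n (\<lambda>i. complex_of_real (c i) \<cdot>\<^sub>m As i) {..<n^2}"
    using onb H unfolding herm_onb_def by blast
  have Hrs: "\<And>r s. r < n \<Longrightarrow> s < n \<Longrightarrow> H $$ (r,s) = (\<Sum>i<n^2. complex_of_real (c i) * As i $$ (r,s))"
  proof -
    fix r s assume rs: "r < n" "s < n"
    have Acd: "\<And>i. i < n^2 \<Longrightarrow> dim_row (As i) = n \<and> dim_col (As i) = n" using Ac by auto
    show "H $$ (r,s) = (\<Sum>i<n^2. complex_of_real (c i) * As i $$ (r,s))"
      using Acd rs by (subst c) (auto intro!: sum.cong)
  qed
  have coef: "(\<Sum>r<n. \<Sum>s<n. H $$ (r,s) * As k $$ (s,r)) = complex_of_real (c k)" if k: "k < n^2" for k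
  proof -
    have "(\<Sum>r<n. \<Sum>s<n. H $$ (r,s) * As k $$ (s,r))
        = (\<Sum>r<n. \<Sum>s<n. \<Sum>i<n^2. complex_of_real (c i) * (As i $$ (r,s) * As k $$ (s,r)))"
      by (intro sum.cong refl) (simp add: Hrs sum_distrib_right mult.assoc)
    also have "\<dots> = (\<Sum>i<n^2. complex_of_real (c i) * (\<Sum>r<n. \<Sum>s<n. As i $$ (r,s) * As k $$ (s,r)))"
      by (simp add: sum_distrib_left sum.swap[of _ "{..<n^2}"])
    also have "\<dots> = (\<Sum>i<n^2. complex_of_real (c i) * mtrace (As i * As k))"
      using Ac k by (intro sum.cong refl) (simp add: mtrace_mult_expand[of _ n])
    also have "\<dots> = (\<Sum>i<n^2. if i = k then complex_of_real (c k) else 0)"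
      using orth k by (intro sum.cong refl) auto
    also have "\<dots> = complex_of_real (c k)" using k by simp
    finally show ?thesis .
  qed
  show ?thesis using Hrs[OF pq] coef by simp
qed


lemma lin_aux: "(\<Sum>k\<in>K. (f k + c * g k) * h k) = (\<Sum>k\<in>K. f k * h k) + c * (\<Sum>k\<in>K. g k * (h k :: complex))"
  by (simp add: distrib_right sum.distrib sum_distrib_left mult.assoc)

lemma gen_expand: assumes onb: "herm_onb n As" and X: "X \<in> carrier_mat n n" and pq: "p < n" "q < n"
  shows "X $$ (p,q) = (\<Sum>i<n^2. (\<Sum>r<n. \<Sum>s<n. X $$ (r,s) * As i $$ (s,r)) * As i $$ (p,q))"
proof -
  define H1 where "H1 = mat n n (\<lambda>(r,s). (X $$ (r,s) + cnj (X $$ (s,r))) / 2)"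
  define H2 where "H2 = mat n n (\<lambda>(r,s). (X $$ (r,s) - cnj (X $$ (s,r))) * (- \<i> / 2))"
  have h1: "hermitian_mat n H1" unfolding hermitian_mat_def H1_def
    by (auto intro!: eq_matI simp: add.commute)
  have h2: "hermitian_mat n H2" unfolding hermitian_mat_def H2_def
    by (auto intro!: eq_matI simp: algebra_simps)
  have XH: "X $$ (r,s) = H1 $$ (r,s) + \<i> * H2 $$ (r,s)" if "r < n" "s < n" for r s
    using that unfolding H1_def H2_def by (simp add: algebra_simps add_divide_distrib[symmetric])
  have "X $$ (p,q) = H1 $$ (p,q) + \<i> * H2 $$ (p,q)" using XH pq .
  also have "\<dots> = (\<Sum>i<n^2. (\<Sum>r<n. \<Sum>s<n. H1 $$ (r,s) * As i $$ (s,r)) * As i $$ (p,q))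
     + \<i> * (\<Sum>i<n^2. (\<Sum>r<n. \<Sum>s<n. H2 $$ (r,s) * As i $$ (s,r)) * As i $$ (p,q))"
    using herm_expand[OF onb h1 pq] herm_expand[OF onb h2 pq] by simp
  also have "\<dots> = (\<Sum>i<n^2. (\<Sum>r<n. \<Sum>s<n. (H1 $$ (r,s) + \<i> * H2 $$ (r,s)) * As i $$ (s,r)) * As i $$ (p,q))"
  proof -
    have inner: "(\<Sum>r<n. \<Sum>s<n. (H1 $$ (r,s) + \<i> * H2 $$ (r,s)) * As k $$ (s,r))
      = (\<Sum>r<n. \<Sum>s<n. H1 $$ (r,s) * As k $$ (s,r)) + \<i> * (\<Sum>r<n. \<Sum>s<n. H2 $$ (r,s) * As k $$ (s,r))" for k
      by (simp add: distrib_right sum.distrib sum_distrib_left mult.assoc)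
    show ?thesis unfolding inner by (rule lin_aux[symmetric])
  qed
  also have "\<dots> = (\<Sum>i<n^2. (\<Sum>r<n. \<Sum>s<n. X $$ (r,s) * As i $$ (s,r)) * As i $$ (p,q))"
    using XH by simp
  finally show ?thesis .
qed

lemma completeness: assumes onb: "herm_onb n As" and idx: "p < n" "q < n" "a < n" "b < n"
  shows "(\<Sum>i<n^2. As i $$ (p,q) * As i $$ (b,a)) = (if p = a \<and> q = b then 1 else 0)"
proof -
  define E :: "complex mat" where "E = mat n n (\<lambda>(r,s). if r = a then (if s = b then 1 else 0) else 0)"
  have Ec: "E \<in> carrier_mat n n" unfolding E_def by simp
  have co: "(\<Sum>r<n. \<Sum>s<n. E $$ (r,s) * As i $$ (s,r)) = As i $$ (b,a)" for i
  proof -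
    have e: "E $$ (r,s) * As i $$ (s,r) = (if r = a then (if s = b then As i $$ (b,a) else 0) else 0)"
      if "r < n" "s < n" for r s using that unfolding E_def by auto
    have "(\<Sum>r<n. \<Sum>s<n. E $$ (r,s) * As i $$ (s,r)) = (\<Sum>r<n. \<Sum>s<n. (if r = a then (if s = b then As i $$ (b,a) else 0) else 0))"
      using e by (intro sum.cong refl) auto
    also have "\<dots> = (\<Sum>r<n. if r = a then (\<Sum>s<n. if s = b then As i $$ (b,a) else 0) else 0)"
      by (intro sum.cong refl) auto
    also have "\<dots> = As i $$ (b,a)" using idx by simp
    finally show ?thesis .
  qed
  have "E $$ (p,q) = (\<Sum>i<n^2. As i $$ (b,a) * As i $$ (p,q))"
    using gen_expand[OF onb Ec idx(1,2)] co by simp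
  moreover have "E $$ (p,q) = (if p = a \<and> q = b then 1 else 0)" unfolding E_def using idx by simp
  ultimately show ?thesis by (simp add: mult.commute)
qed

lemma sum2_in: "(\<Sum>a\<in>A. \<Sum>b\<in>B. \<Sum>c\<in>C. h a b c) = (\<Sum>c\<in>C. \<Sum>a\<in>A. \<Sum>b\<in>B. h a b c)"
proof -
  have "(\<Sum>a\<in>A. \<Sum>b\<in>B. \<Sum>c\<in>C. h a b c) = (\<Sum>a\<in>A. \<Sum>c\<in>C. \<Sum>b\<in>B. h a b c)"
    by (rule sum.cong[OF refl], rule sum.swap)
  also have "\<dots> = (\<Sum>c\<in>C. \<Sum>a\<in>A. \<Sum>b\<in>B. h a b c)" by (rule sum.swap)
  finally show ?thesis .
qed

lemma sum6_swap: "(\<Sum>a\<in>A. \<Sum>b\<in>B. \<Sum>c\<in>C. \<Sum>d\<in>D. \<Sum>e\<in>E. \<Sum>f\<in>F. g a b c d e f)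
  = (\<Sum>c\<in>C. \<Sum>d\<in>D. \<Sum>e\<in>E. \<Sum>f\<in>F. \<Sum>a\<in>A. \<Sum>b\<in>B. g a b c d e f)"
proof -
  have "(\<Sum>a\<in>A. \<Sum>b\<in>B. \<Sum>c\<in>C. \<Sum>d\<in>D. \<Sum>e\<in>E. \<Sum>f\<in>F. g a b c d e f)
    = (\<Sum>c\<in>C. \<Sum>a\<in>A. \<Sum>b\<in>B. \<Sum>d\<in>D. \<Sum>e\<in>E. \<Sum>f\<in>F. g a b c d e f)"
    by (rule sum2_in)
  also have "\<dots> = (\<Sum>c\<in>C. \<Sum>d\<in>D. \<Sum>a\<in>A. \<Sum>b\<in>B. \<Sum>e\<in>E. \<Sum>f\<in>F. g a b c d e f)"
    by (rule sum.cong[OF refl], rule sum2_in)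
  also have "\<dots> = (\<Sum>c\<in>C. \<Sum>d\<in>D. \<Sum>e\<in>E. \<Sum>a\<in>A. \<Sum>b\<in>B. \<Sum>f\<in>F. g a b c d e f)"
    by (rule sum.cong[OF refl], rule sum.cong[OF refl], rule sum2_in)
  also have "\<dots> = (\<Sum>c\<in>C. \<Sum>d\<in>D. \<Sum>e\<in>E. \<Sum>f\<in>F. \<Sum>a\<in>A. \<Sum>b\<in>B. g a b c d e f)"
    by (rule sum.cong[OF refl], rule sum.cong[OF refl], rule sum.cong[OF refl], rule sum2_in)
  finally show ?thesis .
qed

lemma herm_cnj: assumes "hermitian_mat n A" "r < n" "s < n" shows "cnj (A $$ (r,s)) = A $$ (s,r)"
proof -
  have c: "A \<in> carrier_mat n n" and e: "mat_adjoint A = A" using assms(1) unfolding hermitian_mat_def by auto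
  have "mat_adjoint A $$ (s,r) = cnj (A $$ (r,s))" using c assms by (intro adj_index) auto
  then show ?thesis using e by simp
qed

lemma div_mod_eq_iff: "((x::nat) div d = x' div d \<and> x mod d = x' mod d) \<longleftrightarrow> x = x'"
  by (metis div_mult_mod_eq)

lemma M12_frob: assumes A: "herm_onb dA As" and B: "herm_onb dB Bs"
  and X: "X \<in> carrier_mat (dA*dB) (dA*dB)"
  shows "(M12 dA dB As Bs X)^2 = frob (dA*dB) X"
proof -
  define N where "N = dA * dB"
  define T where "T i j = tensor_mat (As i) (Bs j)" for i j
  have Ah: "\<And>i. i < dA^2 \<Longrightarrow> hermitian_mat dA (As i)" using A unfolding herm_onb_def by auto
  have Bh: "\<And>j. j < dB^2 \<Longrightarrow> hermitian_mat dB (Bs j)" using B unfolding herm_onb_def by auto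
  have Ac: "\<And>i. i < dA^2 \<Longrightarrow> As i \<in> carrier_mat dA dA" using Ah unfolding hermitian_mat_def by auto
  have Bc: "\<And>j. j < dB^2 \<Longrightarrow> Bs j \<in> carrier_mat dB dB" using Bh unfolding hermitian_mat_def by auto
  have Tc: "T i j \<in> carrier_mat N N" if "i < dA^2" "j < dB^2" for i j
    unfolding T_def N_def using Ac[OF that(1)] Bc[OF that(2)] by simp
  have Tidx: "T i j $$ (y,x) = As i $$ (y div dB, x div dB) * Bs j $$ (y mod dB, x mod dB)"
    if "i < dA^2" "j < dB^2" "y < N" "x < N" for i j y x
    unfolding T_def using that Ac[OF that(1)] Bc[OF that(2)] unfolding N_def by simp
  have dvd: "y div dB < dA" "y mod dB < dB" if "y < N" for y
    using that unfolding N_def by (auto simp: less_mult_imp_div_less intro!: mod_less_divisor gr0I)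
  have Tcnj: "cnj (T i j $$ (y,x)) = T i j $$ (x,y)"
    if "i < dA^2" "j < dB^2" "y < N" "x < N" for i j y x
    using that by (simp add: Tidx herm_cnj[OF Ah] herm_cnj[OF Bh] dvd)
  have K: "(\<Sum>i<dA^2. \<Sum>j<dB^2. T i j $$ (y,x) * T i j $$ (x',y')) = (if x = x' \<and> y = y' then 1 else 0)"
    if "x < N" "y < N" "x' < N" "y' < N" for x y x' y'
  proof -
    have "(\<Sum>i<dA^2. \<Sum>j<dB^2. T i j $$ (y,x) * T i j $$ (x',y'))
       = (\<Sum>i<dA^2. \<Sum>j<dB^2. (As i $$ (y div dB, x div dB) * As i $$ (x' div dB, y' div dB)) *
             (Bs j $$ (y mod dB, x mod dB) * Bs j $$ (x' mod dB, y' mod dB)))"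
      using that by (intro sum.cong refl) (simp add: Tidx mult_ac)
    also have "\<dots> = (\<Sum>i<dA^2. As i $$ (y div dB, x div dB) * As i $$ (x' div dB, y' div dB)) *
             (\<Sum>j<dB^2. Bs j $$ (y mod dB, x mod dB) * Bs j $$ (x' mod dB, y' mod dB))"
      by (rule sum_product[symmetric])
    also have "\<dots> = (if y div dB = y' div dB \<and> x div dB = x' div dB then 1 else 0) *
                    (if y mod dB = y' mod dB \<and> x mod dB = x' mod dB then 1 else 0)"
      using that by (simp add: completeness[OF A] completeness[OF B] dvd)
    also have "\<dots> = (if x = x' \<and> y = y' then 1 else 0)"
      using div_mod_eq_iff[of x dB x'] div_mod_eq_iff[of y dB y'] by auto
    finally show ?thesis .
  qed
  have c: "corr_entry As Bs X i j = (\<Sum>x<N. \<Sum>y<N. X $$ (x,y) * T i j $$ (y,x))"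
    if "i < dA^2" "j < dB^2" for i j
    unfolding corr_entry_def T_def[symmetric] using X Tc[OF that] unfolding N_def[symmetric]
    by (simp add: mtrace_mult_expand[of _ N])
  have cc: "cnj (corr_entry As Bs X i j) = (\<Sum>x'<N. \<Sum>y'<N. cnj (X $$ (x',y')) * T i j $$ (x',y'))"
    if "i < dA^2" "j < dB^2" for i j
    unfolding c[OF that] using that by (simp add: Tcnj)
  have prod: "corr_entry As Bs X i j * cnj (corr_entry As Bs X i j)
     = (\<Sum>x<N. \<Sum>y<N. \<Sum>x'<N. \<Sum>y'<N. (X $$ (x,y) * cnj (X $$ (x',y'))) * (T i j $$ (y,x) * T i j $$ (x',y')))"
    if "i < dA^2" "j < dB^2" for i j
  proof -
    have "corr_entry As Bs X i j * cnj (corr_entry As Bs X i j) =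
       corr_entry As Bs X i j * (\<Sum>x'<N. \<Sum>y'<N. cnj (X $$ (x',y')) * T i j $$ (x',y'))"
      by (simp only: cc[OF that])
    also have "\<dots> = (\<Sum>x<N. \<Sum>y<N. X $$ (x,y) * T i j $$ (y,x)) * (\<Sum>x'<N. \<Sum>y'<N. cnj (X $$ (x',y')) * T i j $$ (x',y'))"
      by (simp only: c[OF that])
    also have "\<dots> = (\<Sum>x<N. \<Sum>y<N. \<Sum>x'<N. \<Sum>y'<N. (X $$ (x,y) * cnj (X $$ (x',y'))) * (T i j $$ (y,x) * T i j $$ (x',y')))"
      unfolding sum_distrib_right unfolding sum_distrib_left by (simp add: mult_ac)
    finally show ?thesis .
  qed
  have "(\<Sum>i<dA^2. \<Sum>j<dB^2. corr_entry As Bs X i j * cnj (corr_entry As Bs X i j))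
     = (\<Sum>i<dA^2. \<Sum>j<dB^2. \<Sum>x<N. \<Sum>y<N. \<Sum>x'<N. \<Sum>y'<N. (X $$ (x,y) * cnj (X $$ (x',y'))) * (T i j $$ (y,x) * T i j $$ (x',y')))"
    using prod by (intro sum.cong refl) simp
  also have "\<dots> = (\<Sum>x<N. \<Sum>y<N. \<Sum>x'<N. \<Sum>y'<N. \<Sum>i<dA^2. \<Sum>j<dB^2. (X $$ (x,y) * cnj (X $$ (x',y'))) * (T i j $$ (y,x) * T i j $$ (x',y')))"
    by (rule sum6_swap)
  also have "\<dots> = (\<Sum>x<N. \<Sum>y<N. \<Sum>x'<N. \<Sum>y'<N. (X $$ (x,y) * cnj (X $$ (x',y'))) * (if x = x' \<and> y = y' then 1 else 0))"
    by (intro sum.cong refl) (simp add: sum_distrib_left[symmetric] K)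
  also have "\<dots> = (\<Sum>x<N. \<Sum>y<N. X $$ (x,y) * cnj (X $$ (x,y)))"
  proof (intro sum.cong refl)
    fix x y assume "x \<in> {..<N}" "y \<in> {..<N}"
    have "(\<Sum>x'<N. \<Sum>y'<N. (X $$ (x,y) * cnj (X $$ (x',y'))) * (if x = x' \<and> y = y' then 1 else 0))
       = (\<Sum>x'<N. if x = x' then (\<Sum>y'<N. if y = y' then X $$ (x,y) * cnj (X $$ (x,y)) else 0) else 0)"
    proof -
      have e: "(X $$ (x,y) * cnj (X $$ (x',y'))) * (if x = x' \<and> y = y' then 1 else 0)
         = (if x = x' then (if y = y' then X $$ (x,y) * cnj (X $$ (x,y)) else 0) else 0)" for x' y' by auto
      show ?thesis unfolding e by (rule sum.cong[OF refl]) auto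
    qed
    also have "\<dots> = X $$ (x,y) * cnj (X $$ (x,y))" using \<open>x \<in> {..<N}\<close> \<open>y \<in> {..<N}\<close> by simp
    finally show "(\<Sum>x'<N. \<Sum>y'<N. (X $$ (x,y) * cnj (X $$ (x',y'))) * (if x = x' \<and> y = y' then 1 else 0))
       = X $$ (x,y) * cnj (X $$ (x,y))" .
  qed
  finally have eq: "(\<Sum>i<dA^2. \<Sum>j<dB^2. corr_entry As Bs X i j * cnj (corr_entry As Bs X i j))
      = (\<Sum>x<N. \<Sum>y<N. X $$ (x,y) * cnj (X $$ (x,y)))" .
  have "complex_of_real (\<Sum>i<dA^2. \<Sum>j<dB^2. (cmod (corr_entry As Bs X i j))^2) = complex_of_real (frob N X)"
    unfolding frob_def of_real_sum complex_norm_square eq ..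
  then have "(\<Sum>i<dA^2. \<Sum>j<dB^2. (cmod (corr_entry As Bs X i j))^2) = frob N X"
    using of_real_eq_iff by blast
  moreover have "(\<Sum>i<dA^2. \<Sum>j<dB^2. (cmod (corr_entry As Bs X i j))^2) \<ge> 0"
    by (intro sum_nonneg) auto
  ultimately show ?thesis unfolding M12_def N_def by simp
qed

definition Qop :: "nat \<Rightarrow> (nat \<Rightarrow> complex vec) \<Rightarrow> nat \<Rightarrow> complex mat" where
  "Qop dB u l = tensor_mat (ket_bra (u l)) (1\<^sub>m dB)"

lemma proj_def': "proj_meas_A dA dB u X = msum (dA*dB) (dA*dB) (\<lambda>l. Qop dB u l * X * Qop dB u l) {..<dA}"
  unfolding proj_meas_A_def Qop_def ..

lemma onb_carrier: "vec_onb n u \<Longrightarrow> l < n \<Longrightarrow> u l \<in> carrier_vec n"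
  unfolding vec_onb_def by auto

lemma Q_carrier: "vec_onb dA u \<Longrightarrow> l < dA \<Longrightarrow> Qop dB u l \<in> carrier_mat (dA*dB) (dA*dB)"
  unfolding Qop_def using onb_carrier by (intro tensor_carrier) auto

lemma Q_adj: "vec_onb dA u \<Longrightarrow> l < dA \<Longrightarrow> mat_adjoint (Qop dB u l) = Qop dB u l"
  unfolding Qop_def tensor_adj ket_bra_adj by simp

lemma tensor_zero_left: "Y \<in> carrier_mat n2 m2 \<Longrightarrow> tensor_mat (0\<^sub>m n1 m1) Y = 0\<^sub>m (n1*n2) (m1*m2)"
  by (rule eq_matI) (auto simp: less_mult_imp_div_less)

lemma QQ: assumes "vec_onb dA u" "l < dA" "m < dA"
  shows "Qop dB u l * Qop dB u m = (if l = m then Qop dB u l else 0\<^sub>m (dA*dB) (dA*dB))"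
proof -
  have "Qop dB u l * Qop dB u m = tensor_mat (ket_bra (u l) * ket_bra (u m)) (1\<^sub>m dB * 1\<^sub>m dB)"
  proof -
    have c1: "ket_bra (u l) \<in> carrier_mat dA dA" "ket_bra (u m) \<in> carrier_mat dA dA"
      using assms onb_carrier ket_bra_carrier by blast+
    have c2: "1\<^sub>m dB \<in> carrier_mat dB dB" by simp
    show ?thesis unfolding Qop_def by (rule tensor_mult[OF c1(1) c2 c1(2) c2])
  qed
  also have "\<dots> = (if l = m then Qop dB u l else 0\<^sub>m (dA*dB) (dA*dB))"
    unfolding ket_bra_onb[OF assms] Qop_def by (auto simp: tensor_zero_left)
  finally show ?thesis .
qed

lemma QXQ_carrier: "vec_onb dA u \<Longrightarrow> l < dA \<Longrightarrow> X \<in> carrier_mat (dA*dB) (dA*dB) \<Longrightarrow>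
  Qop dB u l * X * Qop dB u l \<in> carrier_mat (dA*dB) (dA*dB)"
  using Q_carrier by (meson mult_carrier_mat)

lemma assoc5: assumes A: "A \<in> carrier_mat n n" and B: "B \<in> carrier_mat n n" and X: "X \<in> carrier_mat n n"
  shows "A * (B * X * B) * A = (A * B) * X * (B * A)"
proof -
  have c: "B * X \<in> carrier_mat n n" "B * A \<in> carrier_mat n n" "B * X * B \<in> carrier_mat n n"
    using assms by (meson mult_carrier_mat)+
  have "A * (B * X * B) * A = A * ((B * X * B) * A)" using assoc_mult_mat[OF A c(3) A] .
  also have "\<dots> = A * (B * X * (B * A))" using assoc_mult_mat[OF c(1) B A] by simp
  also have "\<dots> = A * (B * X) * (B * A)" using assoc_mult_mat[OF A c(1) c(2)] by simp
  also have "\<dots> = A * B * X * (B * A)" using assoc_mult_mat[OF A B X] by simp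
  finally show ?thesis .
qed

lemma proj_carrier: "proj_meas_A dA dB u X \<in> carrier_mat (dA*dB) (dA*dB)"
  unfolding proj_def' by simp

lemma proj_idem: assumes u: "vec_onb dA u" and X: "X \<in> carrier_mat (dA*dB) (dA*dB)"
  shows "proj_meas_A dA dB u (proj_meas_A dA dB u X) = proj_meas_A dA dB u X"
proof -
  let ?N = "dA*dB"
  let ?Q = "Qop dB u"
  have Qc: "\<And>l. l < dA \<Longrightarrow> ?Q l \<in> carrier_mat ?N ?N" using Q_carrier[OF u] .
  have inner: "?Q l * msum ?N ?N (\<lambda>m. ?Q m * X * ?Q m) {..<dA} * ?Q l = ?Q l * X * ?Q l" if l: "l < dA" for l
  proof -
    have "?Q l * msum ?N ?N (\<lambda>m. ?Q m * X * ?Q m) {..<dA} * ?Q l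
        = msum ?N ?N (\<lambda>m. ?Q l * (?Q m * X * ?Q m) * ?Q l) {..<dA}"
    proof -
      have "?Q l * msum ?N ?N (\<lambda>m. ?Q m * X * ?Q m) {..<dA} = msum ?N ?N (\<lambda>m. ?Q l * (?Q m * X * ?Q m)) {..<dA}"
        using Qc l X QXQ_carrier[OF u _ X] by (intro msum_mult_left) auto
      moreover have "msum ?N ?N (\<lambda>m. ?Q l * (?Q m * X * ?Q m)) {..<dA} * ?Q l = msum ?N ?N (\<lambda>m. ?Q l * (?Q m * X * ?Q m) * ?Q l) {..<dA}"
        using Qc l X QXQ_carrier[OF u _ X] by (intro msum_mult_right) (auto intro!: mult_carrier_mat)
      ultimately show ?thesis by simp
    qed
    also have "\<dots> = msum ?N ?N (\<lambda>m. if m = l then ?Q l * X * ?Q l else 0\<^sub>m ?N ?N) {..<dA}"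
    proof (rule msum_cong)
      fix m assume m: "m \<in> {..<dA}"
      have "?Q l * (?Q m * X * ?Q m) * ?Q l = (?Q l * ?Q m) * X * (?Q m * ?Q l)"
        using Qc l m X by (intro assoc5) auto
      also have "\<dots> = (if m = l then ?Q l * X * ?Q l else 0\<^sub>m ?N ?N)"
        using QQ[OF u l, of m] QQ[OF u _ l, of m] m l X Qc by auto
      finally show "?Q l * (?Q m * X * ?Q m) * ?Q l = (if m = l then ?Q l * X * ?Q l else 0\<^sub>m ?N ?N)" .
    qed
    also have "\<dots> = ?Q l * X * ?Q l"
      using l QXQ_carrier[OF u l X] by (intro msum_delta) auto
    finally show ?thesis .
  qed
  show ?thesis unfolding proj_def' by (rule msum_cong) (use inner in auto)
qed

definition ip :: "complex mat \<Rightarrow> complex mat \<Rightarrow> complex" where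
  "ip X Y = mtrace (mat_adjoint X * Y)"

lemma proj_minus: assumes u: "vec_onb dA u" and X: "X \<in> carrier_mat (dA*dB) (dA*dB)" and Y: "Y \<in> carrier_mat (dA*dB) (dA*dB)"
  shows "proj_meas_A dA dB u (X - Y) = proj_meas_A dA dB u X - proj_meas_A dA dB u Y"
proof -
  let ?N = "dA*dB"
  let ?Q = "Qop dB u"
  have e: "?Q l * (X - Y) * ?Q l = ?Q l * X * ?Q l - ?Q l * Y * ?Q l" if l: "l < dA" for l
  proof -
    have Q: "?Q l \<in> carrier_mat ?N ?N" using Q_carrier[OF u l] .
    have "?Q l * (X - Y) = ?Q l * X - ?Q l * Y" using mult_minus_distrib_mat[OF Q X Y] .
    moreover have "(?Q l * X - ?Q l * Y) * ?Q l = ?Q l * X * ?Q l - ?Q l * Y * ?Q l"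
    proof -
      have "?Q l * X \<in> carrier_mat ?N ?N" "?Q l * Y \<in> carrier_mat ?N ?N" using Q X Y by (meson mult_carrier_mat)+
      then show ?thesis using minus_mult_distrib_mat[of "?Q l * X" ?N ?N "?Q l * Y" "?Q l" ?N] Q by blast
    qed
    ultimately show ?thesis by simp
  qed
  show ?thesis unfolding proj_def'
    by (subst msum_minus) (use QXQ_carrier[OF u _ X] QXQ_carrier[OF u _ Y] e in \<open>auto intro!: msum_cong\<close>)
qed

lemma proj_zero: assumes u: "vec_onb dA u"
  shows "proj_meas_A dA dB u (0\<^sub>m (dA*dB) (dA*dB)) = 0\<^sub>m (dA*dB) (dA*dB)"
proof -
  have e: "Qop dB u l * 0\<^sub>m (dA*dB) (dA*dB) * Qop dB u l = 0\<^sub>m (dA*dB) (dA*dB)" if "l < dA" for l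
  proof -
    have Q: "Qop dB u l \<in> carrier_mat (dA*dB) (dA*dB)" using Q_carrier[OF u that] .
    show ?thesis using right_mult_zero_mat[OF Q] left_mult_zero_mat[OF Q] by simp
  qed
  show ?thesis unfolding proj_def' by (rule eq_matI) (auto simp: e)
qed

lemma ip_expand: assumes "X \<in> carrier_mat n n" "Y \<in> carrier_mat n n"
  shows "ip X Y = (\<Sum>r<n. \<Sum>s<n. cnj (X $$ (s,r)) * Y $$ (s,r))"
  unfolding ip_def using assms by (subst mtrace_mult_expand[of _ n]) (auto intro!: sum.cong)

lemma ip_zero: "Y \<in> carrier_mat n n \<Longrightarrow> ip (0\<^sub>m n n) Y = 0"
  by (subst ip_expand[of _ n]) auto

lemma hs_ip: "hs_norm_sq X = Re (ip X X)"
  unfolding hs_norm_sq_def ip_def ..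

lemma hs_add: assumes X: "X \<in> carrier_mat n n" and Y: "Y \<in> carrier_mat n n"
  shows "hs_norm_sq (X + Y) = hs_norm_sq X + hs_norm_sq Y + 2 * Re (ip X Y)"
proof -
  have XY: "X + Y \<in> carrier_mat n n" using X Y by simp
  have e: "Re (cnj (a + b) * (a + b)) = Re (cnj a * a) + Re (cnj b * b) + 2 * Re (cnj a * b)" for a b :: complex
    by (simp add: algebra_simps)
  have "hs_norm_sq (X + Y) = (\<Sum>r<n. \<Sum>s<n. Re (cnj ((X + Y) $$ (s,r)) * (X + Y) $$ (s,r)))"
    unfolding hs_ip ip_expand[OF XY XY] by (simp only: Re_sum)
  also have "\<dots> = (\<Sum>r<n. \<Sum>s<n. Re (cnj (X $$ (s,r) + Y $$ (s,r)) * (X $$ (s,r) + Y $$ (s,r))))"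
    using X Y by (intro sum.cong refl) simp
  also have "\<dots> = (\<Sum>r<n. \<Sum>s<n. Re (cnj (X $$ (s,r)) * X $$ (s,r)) + Re (cnj (Y $$ (s,r)) * Y $$ (s,r))
       + 2 * Re (cnj (X $$ (s,r)) * Y $$ (s,r)))"
    unfolding e ..
  also have "\<dots> = (\<Sum>r<n. \<Sum>s<n. Re (cnj (X $$ (s,r)) * X $$ (s,r))) + (\<Sum>r<n. \<Sum>s<n. Re (cnj (Y $$ (s,r)) * Y $$ (s,r)))
       + 2 * (\<Sum>r<n. \<Sum>s<n. Re (cnj (X $$ (s,r)) * Y $$ (s,r)))"
    by (simp only: sum.distrib sum_distrib_left)
  also have "\<dots> = hs_norm_sq X + hs_norm_sq Y + 2 * Re (ip X Y)"
    unfolding hs_ip ip_expand[OF X X] ip_expand[OF Y Y] ip_expand[OF X Y] by (simp only: Re_sum)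
  finally show ?thesis .
qed

lemma proj_selfadj: assumes u: "vec_onb dA u" and X: "X \<in> carrier_mat (dA*dB) (dA*dB)" and Y: "Y \<in> carrier_mat (dA*dB) (dA*dB)"
  shows "ip (proj_meas_A dA dB u X) Y = ip X (proj_meas_A dA dB u Y)"
proof -
  let ?N = "dA*dB"
  let ?Q = "Qop dB u"
  have Qc: "\<And>l. l < dA \<Longrightarrow> ?Q l \<in> carrier_mat ?N ?N" using Q_carrier[OF u] .
  have aX: "mat_adjoint X \<in> carrier_mat ?N ?N" using X by simp
  have "mat_adjoint (proj_meas_A dA dB u X) = msum ?N ?N (\<lambda>l. ?Q l * mat_adjoint X * ?Q l) {..<dA}"
  proof -
    have "mat_adjoint (proj_meas_A dA dB u X) = msum ?N ?N (\<lambda>l. mat_adjoint (?Q l * X * ?Q l)) {..<dA}"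
      unfolding proj_def' by (rule msum_adj) (use QXQ_carrier[OF u _ X] in auto)
    also have "\<dots> = msum ?N ?N (\<lambda>l. ?Q l * mat_adjoint X * ?Q l) {..<dA}"
    proof (rule msum_cong)
      fix l assume l: "l \<in> {..<dA}"
      have Q: "?Q l \<in> carrier_mat ?N ?N" using Qc l by simp
      have QX: "?Q l * X \<in> carrier_mat ?N ?N" using Q X by simp
      have "mat_adjoint (?Q l * X * ?Q l) = mat_adjoint (?Q l) * mat_adjoint (?Q l * X)"
        using adj_mult[OF QX Q] .
      also have "\<dots> = ?Q l * (mat_adjoint X * ?Q l)"
        using adj_mult[OF Q X] Q_adj[OF u, of l] l by simp
      also have "\<dots> = ?Q l * mat_adjoint X * ?Q l"
        using assoc_mult_mat[OF Q aX Q] by simp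
      finally show "mat_adjoint (?Q l * X * ?Q l) = ?Q l * mat_adjoint X * ?Q l" .
    qed
    finally show ?thesis .
  qed
  then have "ip (proj_meas_A dA dB u X) Y = mtrace (msum ?N ?N (\<lambda>l. ?Q l * mat_adjoint X * ?Q l) {..<dA} * Y)"
    unfolding ip_def by simp
  also have "\<dots> = mtrace (msum ?N ?N (\<lambda>l. ?Q l * mat_adjoint X * ?Q l * Y) {..<dA})"
    using QXQ_carrier[OF u _ aX] Y by (subst msum_mult_right) auto
  also have "\<dots> = (\<Sum>l<dA. mtrace (?Q l * mat_adjoint X * ?Q l * Y))"
    using QXQ_carrier[OF u _ aX] Y by (subst msum_trace) (auto intro: mult_carrier_mat)
  also have "\<dots> = (\<Sum>l<dA. mtrace (mat_adjoint X * (?Q l * Y * ?Q l)))"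
  proof (rule sum.cong[OF refl])
    fix l assume l: "l \<in> {..<dA}"
    have Q: "?Q l \<in> carrier_mat ?N ?N" using Qc l by simp
    have c1: "mat_adjoint X * ?Q l * Y \<in> carrier_mat ?N ?N" using Q aX Y by simp
    have "?Q l * mat_adjoint X * ?Q l * Y = ?Q l * (mat_adjoint X * ?Q l * Y)"
      using Q aX Y by (simp add: assoc_mult_mat[of _ ?N ?N _ ?N _ ?N])
    then have "mtrace (?Q l * mat_adjoint X * ?Q l * Y) = mtrace ((mat_adjoint X * ?Q l * Y) * ?Q l)"
      using mtrace_comm[OF Q c1] by simp
    also have "(mat_adjoint X * ?Q l * Y) * ?Q l = mat_adjoint X * (?Q l * Y * ?Q l)"
      using Q aX Y by (simp add: assoc_mult_mat[of _ ?N ?N _ ?N _ ?N])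
    finally show "mtrace (?Q l * mat_adjoint X * ?Q l * Y) = mtrace (mat_adjoint X * (?Q l * Y * ?Q l))" .
  qed
  also have "\<dots> = mtrace (msum ?N ?N (\<lambda>l. mat_adjoint X * (?Q l * Y * ?Q l)) {..<dA})"
    using QXQ_carrier[OF u _ Y] aX by (subst msum_trace) (auto intro: mult_carrier_mat)
  also have "\<dots> = mtrace (mat_adjoint X * proj_meas_A dA dB u Y)"
    unfolding proj_def' using QXQ_carrier[OF u _ Y] aX by (subst msum_mult_left) auto
  also have "\<dots> = ip X (proj_meas_A dA dB u Y)" unfolding ip_def ..
  finally show ?thesis .
qed

lemma minus_zero_right: "X \<in> carrier_mat n m \<Longrightarrow> X - 0\<^sub>m n m = (X :: complex mat)"
  by (rule eq_matI) auto

lemma pyth: assumes u: "vec_onb dA u" and R: "\<rho> \<in> carrier_mat (dA*dB) (dA*dB)" and Z: "Z \<in> carrier_mat (dA*dB) (dA*dB)"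
  and fixZ: "proj_meas_A dA dB u Z = Z"
  shows "hs_norm_sq (\<rho> - Z) = hs_norm_sq (\<rho> - proj_meas_A dA dB u \<rho>) + hs_norm_sq (proj_meas_A dA dB u \<rho> - Z)"
proof -
  let ?N = "dA*dB"
  let ?P = "proj_meas_A dA dB u"
  have Pc: "?P \<rho> \<in> carrier_mat ?N ?N" by (rule proj_carrier)
  have a: "\<rho> - ?P \<rho> \<in> carrier_mat ?N ?N" using Pc by (rule minus_carrier_mat)
  have b: "?P \<rho> - Z \<in> carrier_mat ?N ?N" using Z by (rule minus_carrier_mat)
  have sum: "(\<rho> - ?P \<rho>) + (?P \<rho> - Z) = \<rho> - Z"
    using R Z Pc by (intro eq_matI) auto
  have "?P \<rho> - Z = ?P (\<rho> - Z)" using proj_minus[OF u R Z] fixZ by simp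
  then have "ip (\<rho> - ?P \<rho>) (?P \<rho> - Z) = ip (?P (\<rho> - ?P \<rho>)) (\<rho> - Z)"
    using proj_selfadj[OF u a minus_carrier_mat[OF Z]] by simp
  also have "?P (\<rho> - ?P \<rho>) = 0\<^sub>m ?N ?N"
    using proj_minus[OF u R Pc] proj_idem[OF u R] Pc by simp
  finally have "ip (\<rho> - ?P \<rho>) (?P \<rho> - Z) = 0" using ip_zero[OF minus_carrier_mat[OF Z]] by simp
  then show ?thesis using hs_add[OF a b] sum by simp
qed

lemma pyth0: assumes u: "vec_onb dA u" and R: "\<rho> \<in> carrier_mat (dA*dB) (dA*dB)"
  shows "hs_norm_sq \<rho> = hs_norm_sq (\<rho> - proj_meas_A dA dB u \<rho>) + hs_norm_sq (proj_meas_A dA dB u \<rho>)"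
  using pyth[OF u R _ proj_zero[OF u]] minus_zero_right[OF R] minus_zero_right[OF proj_carrier] by simp

lemma proj_cq: assumes u: "vec_onb dA u" and Y: "\<And>k. k < dA \<Longrightarrow> Y k \<in> carrier_mat dB dB"
  shows "proj_meas_A dA dB u (msum (dA*dB) (dA*dB) (\<lambda>k. tensor_mat (ket_bra (u k)) (Y k)) {..<dA})
       = msum (dA*dB) (dA*dB) (\<lambda>k. tensor_mat (ket_bra (u k)) (Y k)) {..<dA}"
proof -
  let ?N = "dA*dB"
  let ?Q = "Qop dB u"
  let ?T = "\<lambda>k. tensor_mat (ket_bra (u k)) (Y k)"
  have Pk: "\<And>k. k < dA \<Longrightarrow> ket_bra (u k) \<in> carrier_mat dA dA" using u onb_carrier ket_bra_carrier by blast
  have Tc: "\<And>k. k < dA \<Longrightarrow> ?T k \<in> carrier_mat ?N ?N" using Pk Y by (meson tensor_carrier)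
  have one: "1\<^sub>m dB \<in> carrier_mat dB dB" by simp
  have QTQ: "?Q l * ?T k * ?Q l = (if k = l then ?T l else 0\<^sub>m ?N ?N)" if l: "l < dA" and k: "k < dA" for l k
  proof -
    have "?Q l * ?T k = tensor_mat (ket_bra (u l) * ket_bra (u k)) (1\<^sub>m dB * Y k)"
      unfolding Qop_def by (rule tensor_mult[OF Pk[OF l] one Pk[OF k] Y[OF k]])
    also have "\<dots> = tensor_mat (if l = k then ket_bra (u l) else 0\<^sub>m dA dA) (Y k)"
      using ket_bra_onb[OF u l k] Y[OF k] by simp
    finally have 1: "?Q l * ?T k = tensor_mat (if l = k then ket_bra (u l) else 0\<^sub>m dA dA) (Y k)" .
    have c: "(if l = k then ket_bra (u l) else 0\<^sub>m dA dA) \<in> carrier_mat dA dA" using Pk[OF l] by auto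
    have "?Q l * ?T k * ?Q l = tensor_mat ((if l = k then ket_bra (u l) else 0\<^sub>m dA dA) * ket_bra (u l)) (Y k * 1\<^sub>m dB)"
    proof -
      have "?Q l * ?T k * ?Q l = tensor_mat (if l = k then ket_bra (u l) else 0\<^sub>m dA dA) (Y k) * tensor_mat (ket_bra (u l)) (1\<^sub>m dB)"
        unfolding 1 by (simp only: Qop_def)
      also have "\<dots> = tensor_mat ((if l = k then ket_bra (u l) else 0\<^sub>m dA dA) * ket_bra (u l)) (Y k * 1\<^sub>m dB)"
        by (rule tensor_mult[OF c Y[OF k] Pk[OF l] one])
      finally show ?thesis .
    qed
    also have "\<dots> = (if k = l then ?T l else 0\<^sub>m ?N ?N)"
      using ket_bra_onb[OF u l l] Y[OF k] Pk[OF l] by (auto simp: tensor_zero_left)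
    finally show ?thesis .
  qed
  have inner: "?Q l * msum ?N ?N ?T {..<dA} * ?Q l = ?T l" if l: "l < dA" for l
  proof -
    have Q: "?Q l \<in> carrier_mat ?N ?N" using Q_carrier[OF u l] .
    have "?Q l * msum ?N ?N ?T {..<dA} = msum ?N ?N (\<lambda>k. ?Q l * ?T k) {..<dA}"
      using Q Tc by (intro msum_mult_left) auto
    moreover have "msum ?N ?N (\<lambda>k. ?Q l * ?T k) {..<dA} * ?Q l = msum ?N ?N (\<lambda>k. ?Q l * ?T k * ?Q l) {..<dA}"
      using Q Tc by (intro msum_mult_right) (auto intro!: mult_carrier_mat)
    moreover have "msum ?N ?N (\<lambda>k. ?Q l * ?T k * ?Q l) {..<dA} = msum ?N ?N (\<lambda>k. if k = l then ?T k else 0\<^sub>m ?N ?N) {..<dA}"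
      using QTQ l by (intro msum_cong) auto
    moreover have "\<dots> = ?T l" using l Tc by (intro msum_delta) auto
    ultimately show ?thesis by simp
  qed
  show ?thesis unfolding proj_def' by (rule msum_cong) (use inner in auto)
qed

lemma cscalar_expand: "w \<in> carrier_vec n \<Longrightarrow> v \<bullet>c w = (\<Sum>i<n. v $ i * cnj (w $ i))"
  unfolding scalar_prod_def by (auto simp: atLeast0LessThan conjugate_complex_def intro!: sum.cong)

lemma onb_complete: assumes u: "vec_onb n u"
  shows "msum n n (\<lambda>k. ket_bra (u k)) {..<n} = 1\<^sub>m n"
proof -
  define U where "U = mat n n (\<lambda>(i,k). u k $ i)"
  have Uc: "U \<in> carrier_mat n n" unfolding U_def by simp
  have uc: "\<And>k. k < n \<Longrightarrow> u k \<in> carrier_vec n" using u onb_carrier by blast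
  have "mat_adjoint U * U = 1\<^sub>m n"
  proof (rule eq_matI)
    fix k m assume "k < dim_row (1\<^sub>m n :: complex mat)" "m < dim_col (1\<^sub>m n :: complex mat)"
    then have km: "k < n" "m < n" by auto
    have "(mat_adjoint U * U) $$ (k,m) = (\<Sum>i<n. u m $ i * cnj (u k $ i))"
      using km Uc unfolding U_def by (auto simp: scalar_prod_def atLeast0LessThan mult.commute intro!: sum.cong)
    also have "\<dots> = u m \<bullet>c u k" using cscalar_expand[OF uc[OF km(1)]] by simp
    also have "\<dots> = 1\<^sub>m n $$ (k,m)" using u km unfolding vec_onb_def by auto
    finally show "(mat_adjoint U * U) $$ (k,m) = 1\<^sub>m n $$ (k,m)" .
  qed (use Uc in auto)
  then have UU: "U * mat_adjoint U = 1\<^sub>m n"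
    using mat_mult_left_right_inverse[of "mat_adjoint U" n U] Uc by simp
  show ?thesis
  proof (rule eq_matI)
    fix i j assume "i < dim_row (1\<^sub>m n :: complex mat)" "j < dim_col (1\<^sub>m n :: complex mat)"
    then have ij: "i < n" "j < n" by auto
    have "msum n n (\<lambda>k. ket_bra (u k)) {..<n} $$ (i,j) = (\<Sum>k<n. u k $ i * cnj (u k $ j))"
    proof -
      have ud: "\<And>k. k < n \<Longrightarrow> dim_vec (u k) = n" using uc by auto
      show ?thesis using ij ud by (auto intro!: sum.cong)
    qed
    also have "\<dots> = (U * mat_adjoint U) $$ (i,j)"
      using ij Uc unfolding U_def by (auto simp: scalar_prod_def atLeast0LessThan intro!: sum.cong)
    finally show "msum n n (\<lambda>k. ket_bra (u k)) {..<n} $$ (i,j) = 1\<^sub>m n $$ (i,j)" using UU by simp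
  qed auto
qed

lemma Q_complete: assumes u: "vec_onb dA u"
  shows "msum (dA*dB) (dA*dB) (Qop dB u) {..<dA} = 1\<^sub>m (dA*dB)"
proof -
  have "msum (dA*dB) (dA*dB) (Qop dB u) {..<dA} = msum (dA*dB) (dA*dB) (\<lambda>k. tensor_mat (ket_bra (u k)) (1\<^sub>m dB)) {..<dA}"
    unfolding Qop_def ..
  also have "\<dots> = tensor_mat (msum dA dA (\<lambda>k. ket_bra (u k)) {..<dA}) (1\<^sub>m dB)"
    using u onb_carrier ket_bra_carrier by (intro tensor_msum_left) auto
  also have "\<dots> = 1\<^sub>m (dA*dB)" unfolding onb_complete[OF u] tensor_one ..
  finally show ?thesis .
qed

definition Ucol :: "nat \<Rightarrow> (nat \<Rightarrow> complex vec) \<Rightarrow> nat \<Rightarrow> complex mat" where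
  "Ucol dA u k = mat dA 1 (\<lambda>(i,_). u k $ i)"

definition Vop :: "nat \<Rightarrow> nat \<Rightarrow> (nat \<Rightarrow> complex vec) \<Rightarrow> nat \<Rightarrow> complex mat" where
  "Vop dA dB u k = tensor_mat (Ucol dA u k) (1\<^sub>m dB)"

definition rk :: "nat \<Rightarrow> nat \<Rightarrow> (nat \<Rightarrow> complex vec) \<Rightarrow> complex mat \<Rightarrow> nat \<Rightarrow> complex mat" where
  "rk dA dB u \<rho> k = mat_adjoint (Vop dA dB u k) * \<rho> * Vop dA dB u k"

lemma Ucol_carrier: "Ucol dA u k \<in> carrier_mat dA 1" unfolding Ucol_def by simp

lemma V_carrier: "Vop dA dB u k \<in> carrier_mat (dA*dB) dB"
  unfolding Vop_def using tensor_carrier[OF Ucol_carrier, of "1\<^sub>m dB" dB dB] by simp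

lemma Vadj_carrier: "mat_adjoint (Vop dA dB u k) \<in> carrier_mat dB (dA*dB)"
  using V_carrier by (rule adj_carrier)

lemma rk_carrier: "\<rho> \<in> carrier_mat (dA*dB) (dA*dB) \<Longrightarrow> rk dA dB u \<rho> k \<in> carrier_mat dB dB"
  unfolding rk_def using V_carrier Vadj_carrier by (meson mult_carrier_mat)

lemma ket_bra_Ucol: assumes "u k \<in> carrier_vec dA"
  shows "ket_bra (u k) = Ucol dA u k * mat_adjoint (Ucol dA u k)"
  using assms unfolding Ucol_def by (intro eq_matI) (auto simp: scalar_prod_def)

lemma tensor_one_left: "tensor_mat (1\<^sub>m 1) Y = Y"
  by (rule eq_matI) auto

lemma Q_VV: assumes "u k \<in> carrier_vec dA"
  shows "Qop dB u k = Vop dA dB u k * mat_adjoint (Vop dA dB u k)"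
proof -
  have one: "1\<^sub>m dB \<in> carrier_mat dB dB" by simp
  have "Vop dA dB u k * mat_adjoint (Vop dA dB u k) = tensor_mat (Ucol dA u k) (1\<^sub>m dB) * tensor_mat (mat_adjoint (Ucol dA u k)) (1\<^sub>m dB)"
    unfolding Vop_def tensor_adj by simp
  also have "\<dots> = tensor_mat (Ucol dA u k * mat_adjoint (Ucol dA u k)) (1\<^sub>m dB * 1\<^sub>m dB)"
    by (rule tensor_mult[OF Ucol_carrier one adj_carrier[OF Ucol_carrier] one])
  also have "\<dots> = Qop dB u k" unfolding Qop_def ket_bra_Ucol[where u=u and k=k and dA=dA, OF assms] by simp
  finally show ?thesis by simp
qed

lemma assoc_VW: assumes V: "V \<in> carrier_mat n m" and W: "W \<in> carrier_mat m n" and R: "R \<in> carrier_mat n n"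
  shows "(V * W) * R * (V * W) = V * (W * R * V) * W"
proof -
  have c: "W * R \<in> carrier_mat m n" "W * R * V \<in> carrier_mat m m" "V * W \<in> carrier_mat n n"
    using assms by (meson mult_carrier_mat)+
  have "(V * W) * R * (V * W) = V * (W * R) * (V * W)" using assoc_mult_mat[OF V W R] by simp
  also have "\<dots> = V * (W * R * (V * W))" using assoc_mult_mat[OF V c(1) c(3)] .
  also have "W * R * (V * W) = (W * R * V) * W" using assoc_mult_mat[OF c(1) V W] by simp
  also have "V * (W * R * V * W) = V * (W * R * V) * W" using assoc_mult_mat[OF V c(2) W] by simp
  finally show ?thesis .
qed

lemma QrhoQ: assumes uk: "u k \<in> carrier_vec dA" and R: "\<rho> \<in> carrier_mat (dA*dB) (dA*dB)"
  shows "Qop dB u k * \<rho> * Qop dB u k = tensor_mat (ket_bra (u k)) (rk dA dB u \<rho> k)"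
proof -
  let ?V = "Vop dA dB u k"
  let ?r = "rk dA dB u \<rho> k"
  have one: "1\<^sub>m dB \<in> carrier_mat dB dB" and one1: "1\<^sub>m 1 \<in> carrier_mat 1 1" by simp_all
  have rc: "?r \<in> carrier_mat dB dB" using rk_carrier[OF R] .
  have "Qop dB u k * \<rho> * Qop dB u k = ?V * ?r * mat_adjoint ?V"
    unfolding Q_VV[where u=u and k=k and dA=dA and dB=dB, OF uk] rk_def by (rule assoc_VW[OF V_carrier Vadj_carrier R])
  also have "?V * ?r = tensor_mat (Ucol dA u k) (1\<^sub>m dB) * tensor_mat (1\<^sub>m 1) ?r"
    unfolding Vop_def tensor_one_left ..
  also have "\<dots> = tensor_mat (Ucol dA u k * 1\<^sub>m 1) (1\<^sub>m dB * ?r)"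
    by (rule tensor_mult[OF Ucol_carrier one one1 rc])
  also have "\<dots> = tensor_mat (Ucol dA u k) ?r" using rc Ucol_carrier[of dA u k] by simp
  also have "mat_adjoint ?V = tensor_mat (mat_adjoint (Ucol dA u k)) (1\<^sub>m dB)"
    unfolding Vop_def tensor_adj by simp
  also have "tensor_mat (Ucol dA u k) ?r * tensor_mat (mat_adjoint (Ucol dA u k)) (1\<^sub>m dB)
      = tensor_mat (Ucol dA u k * mat_adjoint (Ucol dA u k)) (?r * 1\<^sub>m dB)"
    by (rule tensor_mult[OF Ucol_carrier rc adj_carrier[OF Ucol_carrier] one])
  also have "\<dots> = tensor_mat (ket_bra (u k)) ?r" unfolding ket_bra_Ucol[where u=u and k=k and dA=dA, OF uk] using rc by simp
  finally show ?thesis .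
qed

lemma mat_vec_expand: "M \<in> carrier_mat n m \<Longrightarrow> v \<in> carrier_vec m \<Longrightarrow> i < n \<Longrightarrow> (M *\<^sub>v v) $ i = (\<Sum>j<m. M $$ (i,j) * v $ j)"
  by (auto simp: scalar_prod_def atLeast0LessThan intro!: sum.cong)

lemma adj_cscalar: assumes M: "(M::complex mat) \<in> carrier_mat n m" and w: "w \<in> carrier_vec n" and v: "v \<in> carrier_vec m"
  shows "(mat_adjoint M *\<^sub>v w) \<bullet>c v = w \<bullet>c (M *\<^sub>v v)"
proof -
  have "(mat_adjoint M *\<^sub>v w) \<bullet>c v = (\<Sum>j<m. (\<Sum>i<n. cnj (M $$ (i,j)) * w $ i) * cnj (v $ j))"
  proof -
    have aM: "mat_adjoint M \<in> carrier_mat m n" using M by simp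
    have e: "(mat_adjoint M *\<^sub>v w) $ j = (\<Sum>i<n. cnj (M $$ (i,j)) * w $ i)" if j: "j < m" for j
      using mat_vec_expand[OF aM w j] M j by (auto intro!: sum.cong)
    show ?thesis unfolding cscalar_expand[OF v] using e by (intro sum.cong refl) simp
  qed
  also have "\<dots> = (\<Sum>j<m. \<Sum>i<n. w $ i * cnj (M $$ (i,j) * v $ j))"
    unfolding sum_distrib_right by (intro sum.cong refl) (simp add: mult_ac)
  also have "\<dots> = (\<Sum>i<n. \<Sum>j<m. w $ i * cnj (M $$ (i,j) * v $ j))"
    by (rule sum.swap)
  also have "\<dots> = w \<bullet>c (M *\<^sub>v v)"
  proof -
    have Mv: "M *\<^sub>v v \<in> carrier_vec n" using M v by simp
    have e2: "w $ i * cnj ((M *\<^sub>v v) $ i) = (\<Sum>j<m. w $ i * cnj (M $$ (i,j) * v $ j))" if i: "i < n" for i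
      unfolding mat_vec_expand[OF M v i] cnj_sum sum_distrib_left ..
    show ?thesis unfolding cscalar_expand[OF Mv] using e2 by simp
  qed
  finally show ?thesis .
qed

definition psd :: "nat \<Rightarrow> complex mat \<Rightarrow> bool" where
  "psd n M \<longleftrightarrow> (\<forall>v \<in> carrier_vec n. 0 \<le> (M *\<^sub>v v) \<bullet>c v)"

lemma rk_herm: assumes R: "hermitian_mat (dA*dB) \<rho>"
  shows "hermitian_mat dB (rk dA dB u \<rho> k)"
proof -
  have Rc: "\<rho> \<in> carrier_mat (dA*dB) (dA*dB)" and Ra: "mat_adjoint \<rho> = \<rho>" using R unfolding hermitian_mat_def by auto
  let ?V = "Vop dA dB u k"
  let ?W = "mat_adjoint ?V"
  have WR: "?W * \<rho> \<in> carrier_mat dB (dA*dB)" using Vadj_carrier Rc by (meson mult_carrier_mat)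
  have "mat_adjoint (?W * \<rho> * ?V) = ?W * mat_adjoint (?W * \<rho>)"
    using adj_mult[OF WR V_carrier] by simp
  also have "mat_adjoint (?W * \<rho>) = \<rho> * ?V"
    using adj_mult[OF Vadj_carrier Rc] Ra by simp
  also have "?W * (\<rho> * ?V) = ?W * \<rho> * ?V"
    using assoc_mult_mat[OF Vadj_carrier Rc V_carrier] by simp
  finally show ?thesis unfolding hermitian_mat_def rk_def using rk_carrier[OF Rc] unfolding rk_def by simp
qed

lemma rk_psd: assumes R: "is_state (dA*dB) \<rho>"
  shows "psd dB (rk dA dB u \<rho> k)"
  unfolding psd_def
proof
  fix v :: "complex vec" assume v: "v \<in> carrier_vec dB"
  have Rc: "\<rho> \<in> carrier_mat (dA*dB) (dA*dB)" using R unfolding is_state_def hermitian_mat_def by auto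
  let ?V = "Vop dA dB u k"
  let ?W = "mat_adjoint ?V"
  have Vv: "?V *\<^sub>v v \<in> carrier_vec (dA*dB)" by (rule mult_mat_vec_carrier[OF V_carrier v])
  have RVv: "\<rho> *\<^sub>v (?V *\<^sub>v v) \<in> carrier_vec (dA*dB)" using Rc Vv by simp
  have WR: "?W * \<rho> \<in> carrier_mat dB (dA*dB)" using Vadj_carrier Rc by (meson mult_carrier_mat)
  have "rk dA dB u \<rho> k *\<^sub>v v = (?W * \<rho>) *\<^sub>v (?V *\<^sub>v v)"
    unfolding rk_def using assoc_mult_mat_vec[OF WR V_carrier v] .
  also have "\<dots> = ?W *\<^sub>v (\<rho> *\<^sub>v (?V *\<^sub>v v))"
    using assoc_mult_mat_vec[OF Vadj_carrier Rc Vv] .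
  finally have "(rk dA dB u \<rho> k *\<^sub>v v) \<bullet>c v = (\<rho> *\<^sub>v (?V *\<^sub>v v)) \<bullet>c (?V *\<^sub>v v)"
    using adj_cscalar[OF V_carrier RVv v] by simp
  also have "0 \<le> \<dots>" using R Vv unfolding is_state_def by blast
  finally show "0 \<le> (rk dA dB u \<rho> k *\<^sub>v v) \<bullet>c v" by simp
qed

lemma sum_two_delta: assumes "b \<noteq> d" "b < (n::nat)" "d < n"
  shows "(\<Sum>j<n. f j * (if j = b then x else if j = d then y else 0)) = f b * x + f d * (y::complex)"
proof -
  have "(\<Sum>j<n. f j * (if j = b then x else if j = d then y else 0))
      = (\<Sum>j<n. (if j = b then f b * x else 0) + (if j = d then f d * y else 0))"
    using assms by (intro sum.cong refl) auto
  also have "\<dots> = (\<Sum>j<n. if j = b then f b * x else 0) + (\<Sum>j<n. if j = d then f d * y else 0)"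
    by (rule sum.distrib)
  also have "\<dots> = f b * x + f d * y" using assms by (simp only: sum.delta finite_lessThan lessThan_iff if_True)
  finally show ?thesis .
qed

lemma psd_diag: assumes M: "M \<in> carrier_mat n n" and P: "psd n M" and b: "b < n"
  shows "0 \<le> M $$ (b,b)"
proof -
  define v :: "complex vec" where "v = vec n (\<lambda>i. if i = b then 1 else 0)"
  have v: "v \<in> carrier_vec n" unfolding v_def by simp
  have Mv: "\<And>i. i < n \<Longrightarrow> (M *\<^sub>v v) $ i = M $$ (i,b)"
  proof -
    fix i assume i: "i < n"
    have "(M *\<^sub>v v) $ i = (\<Sum>j<n. M $$ (i,j) * v $ j)" using M v i by (rule mat_vec_expand)
    also have "\<dots> = (\<Sum>j<n. if j = b then M $$ (i,b) else 0)" unfolding v_def by (intro sum.cong refl) auto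
    also have "\<dots> = M $$ (i,b)" using b by (simp only: sum.delta finite_lessThan lessThan_iff if_True)
    finally show "(M *\<^sub>v v) $ i = M $$ (i,b)" .
  qed
  have "(M *\<^sub>v v) \<bullet>c v = (\<Sum>i<n. (M *\<^sub>v v) $ i * cnj (v $ i))" using cscalar_expand[OF v] .
  also have "\<dots> = (\<Sum>i<n. if i = b then M $$ (b,b) else 0)"
    using Mv unfolding v_def by (intro sum.cong refl) auto
  also have "\<dots> = M $$ (b,b)" using b by simp
  finally show ?thesis using P v unfolding psd_def by metis
qed

lemma psd_zero: assumes H: "hermitian_mat n M" and P: "psd n M" and Z: "\<And>b. b < n \<Longrightarrow> M $$ (b,b) = 0"
  shows "M = 0\<^sub>m n n"
proof (rule eq_matI)
  have M: "M \<in> carrier_mat n n" using H unfolding hermitian_mat_def by auto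
  fix b d assume "b < dim_row (0\<^sub>m n n :: complex mat)" "d < dim_col (0\<^sub>m n n :: complex mat)"
  then have bd: "b < n" "d < n" by auto
  show "M $$ (b,d) = 0\<^sub>m n n $$ (b,d)"
  proof (cases "b = d")
    case True then show ?thesis using Z bd by simp
  next
    case False
    define t where "t = - M $$ (b,d)"
    define v :: "complex vec" where "v = vec n (\<lambda>i. if i = b then t else if i = d then 1 else 0)"
    have v: "v \<in> carrier_vec n" unfolding v_def by simp
    have Mv: "(M *\<^sub>v v) $ i = M $$ (i,b) * t + M $$ (i,d)" if "i < n" for i
    proof -
      have "(M *\<^sub>v v) $ i = (\<Sum>j<n. M $$ (i,j) * (if j = b then t else if j = d then 1 else 0))"
        using M v that unfolding v_def by (subst mat_vec_expand[of _ n n]) (auto intro!: sum.cong)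
      also have "\<dots> = M $$ (i,b) * t + M $$ (i,d) * 1" using sum_two_delta[OF False bd] .
      finally show ?thesis by simp
    qed
    have "(M *\<^sub>v v) \<bullet>c v = (\<Sum>i<n. (M *\<^sub>v v) $ i * cnj (v $ i))" using cscalar_expand[OF v] .
    also have "\<dots> = (\<Sum>i<n. (M $$ (i,b) * t + M $$ (i,d)) * (if i = b then cnj t else if i = d then 1 else 0))"
      using Mv unfolding v_def by (intro sum.cong refl) auto
    also have "\<dots> = (M $$ (b,b) * t + M $$ (b,d)) * cnj t + (M $$ (d,b) * t + M $$ (d,d)) * 1"
      using sum_two_delta[OF False bd] .
    also have "\<dots> = M $$ (b,d) * cnj t + M $$ (d,b) * t" using Z bd by simp
    also have "M $$ (d,b) = cnj (M $$ (b,d))" using herm_cnj[OF H bd] by simp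
    also have "M $$ (b,d) * cnj t + cnj (M $$ (b,d)) * t = - 2 * complex_of_real ((cmod (M $$ (b,d)))^2)"
      unfolding t_def complex_norm_square by simp
    finally have "0 \<le> - 2 * complex_of_real ((cmod (M $$ (b,d)))^2)"
      using P v unfolding psd_def by metis
    then have "(cmod (M $$ (b,d)))^2 \<le> 0" by (simp add: less_eq_complex_def)
    then show ?thesis using bd by simp
  qed
qed (use H in \<open>auto simp: hermitian_mat_def\<close>)

lemma trace_rk: assumes u: "vec_onb dA u" and k: "k < dA" and R: "\<rho> \<in> carrier_mat (dA*dB) (dA*dB)"
  shows "mtrace (rk dA dB u \<rho> k) = mtrace (Qop dB u k * \<rho>)"
proof -
  let ?V = "Vop dA dB u k"
  let ?W = "mat_adjoint ?V"
  have WR: "?W * \<rho> \<in> carrier_mat dB (dA*dB)" using Vadj_carrier R by (meson mult_carrier_mat)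
  have "mtrace (rk dA dB u \<rho> k) = mtrace (?V * (?W * \<rho>))"
    unfolding rk_def by (rule mtrace_comm[OF WR V_carrier])
  also have "?V * (?W * \<rho>) = Qop dB u k * \<rho>"
    using assoc_mult_mat[OF V_carrier Vadj_carrier R] Q_VV[where u=u and k=k and dA=dA and dB=dB, OF onb_carrier[OF u k]] by simp
  finally show ?thesis .
qed

lemma sum_trace_rk: assumes u: "vec_onb dA u" and R: "\<rho> \<in> carrier_mat (dA*dB) (dA*dB)"
  shows "(\<Sum>k<dA. mtrace (rk dA dB u \<rho> k)) = mtrace \<rho>"
proof -
  let ?N = "dA*dB"
  have Qc: "\<And>k. k < dA \<Longrightarrow> Qop dB u k \<in> carrier_mat ?N ?N" using Q_carrier[OF u] .
  have "(\<Sum>k<dA. mtrace (rk dA dB u \<rho> k)) = (\<Sum>k<dA. mtrace (Qop dB u k * \<rho>))"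
    using trace_rk[OF u _ R] by simp
  also have "\<dots> = mtrace (msum ?N ?N (\<lambda>k. Qop dB u k * \<rho>) {..<dA})"
    using Qc R by (subst msum_trace) (auto intro: mult_carrier_mat)
  also have "msum ?N ?N (\<lambda>k. Qop dB u k * \<rho>) {..<dA} = msum ?N ?N (Qop dB u) {..<dA} * \<rho>"
    using Qc R by (subst msum_mult_right) auto
  also have "\<dots> = \<rho>" unfolding Q_complete[OF u] using R by simp
  finally show ?thesis .
qed

lemma psd_trace_nonneg: assumes M: "M \<in> carrier_mat n n" and P: "psd n M"
  shows "0 \<le> mtrace M"
  unfolding mtrace_def using psd_diag[OF M P] M by (intro sum_nonneg) auto

lemma complex_nonneg_real: "0 \<le> (z::complex) \<Longrightarrow> z = complex_of_real (Re z) \<and> 0 \<le> Re z"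
  by (auto simp: less_eq_complex_def complex_eq_iff)

lemma psd_trace_zero: assumes H: "hermitian_mat n M" and P: "psd n M" and T: "mtrace M = 0"
  shows "M = 0\<^sub>m n n"
proof -
  have M: "M \<in> carrier_mat n n" using H unfolding hermitian_mat_def by auto
  have d: "\<And>b. b < n \<Longrightarrow> 0 \<le> M $$ (b,b)" using psd_diag[OF M P] .
  have "(\<Sum>b<n. Re (M $$ (b,b))) = Re (mtrace M)" unfolding mtrace_def using M by (simp add: Re_sum)
  also have "\<dots> = 0" using T by simp
  finally have "\<forall>b\<in>{..<n}. Re (M $$ (b,b)) = 0"
    using d complex_nonneg_real by (subst sum_nonneg_eq_0_iff[symmetric]) auto
  then have "\<And>b. b < n \<Longrightarrow> M $$ (b,b) = 0" using d complex_nonneg_real by (metis lessThan_iff of_real_0)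
  then show ?thesis by (rule psd_zero[OF H P])
qed

lemma scaled_state: assumes H: "hermitian_mat n M" and P: "psd n M" and T: "mtrace M = complex_of_real p" and p: "p > 0"
  shows "is_state n (complex_of_real (1/p) \<cdot>\<^sub>m M)"
proof -
  have M: "M \<in> carrier_mat n n" and Ma: "mat_adjoint M = M" using H unfolding hermitian_mat_def by auto
  have h: "hermitian_mat n (complex_of_real (1/p) \<cdot>\<^sub>m M)"
    unfolding hermitian_mat_def adj_smult using M Ma by simp
  have ps: "0 \<le> ((complex_of_real (1/p) \<cdot>\<^sub>m M) *\<^sub>v v) \<bullet>c v" if v: "v \<in> carrier_vec n" for v
  proof -
    have "(complex_of_real (1/p) \<cdot>\<^sub>m M) *\<^sub>v v = complex_of_real (1/p) \<cdot>\<^sub>v (M *\<^sub>v v)"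
      using M v by (intro eq_vecI) (auto simp: scalar_prod_def sum_distrib_left mult.assoc)
    then have "((complex_of_real (1/p) \<cdot>\<^sub>m M) *\<^sub>v v) \<bullet>c v = complex_of_real (1/p) * ((M *\<^sub>v v) \<bullet>c v)"
      using M v by (simp add: cscalar_expand[OF v] sum_distrib_left mult.assoc)
    moreover have "0 \<le> complex_of_real (1/p)" using p by (simp add: less_eq_complex_def)
    moreover have "0 \<le> (M *\<^sub>v v) \<bullet>c v" using P v unfolding psd_def by blast
    ultimately show ?thesis by (metis mult_nonneg_nonneg)
  qed
  have "mtrace (complex_of_real (1/p) \<cdot>\<^sub>m M) = complex_of_real (1/p) * mtrace M"
    unfolding mtrace_def using M by (simp add: sum_distrib_left)
  also have "\<dots> = 1" using T p by (simp add: of_real_mult[symmetric] del: of_real_mult)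
  finally show ?thesis unfolding is_state_def using h ps by blast
qed

lemma smult_cancel_mat: assumes "p \<noteq> 0" "M \<in> carrier_mat n m"
  shows "complex_of_real p \<cdot>\<^sub>m (complex_of_real (1/p) \<cdot>\<^sub>m M) = M"
  using assms by (intro eq_matI) (auto simp: of_real_mult[symmetric] simp del: of_real_mult)

lemma proj_in_cq: assumes u: "vec_onb dA u" and R: "is_state (dA*dB) \<rho>"
  shows "proj_meas_A dA dB u \<rho> \<in> cq_states dA dB"
proof -
  let ?N = "dA*dB"
  have Rh: "hermitian_mat ?N \<rho>" using R unfolding is_state_def by auto
  have Rc: "\<rho> \<in> carrier_mat ?N ?N" using Rh unfolding hermitian_mat_def by auto
  have Rt: "mtrace \<rho> = 1" using R unfolding is_state_def by auto
  define r where "r k = rk dA dB u \<rho> k" for k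
  define p where "p k = Re (mtrace (r k))" for k
  have rc: "\<And>k. r k \<in> carrier_mat dB dB" unfolding r_def using rk_carrier[OF Rc] .
  have rh: "\<And>k. hermitian_mat dB (r k)" unfolding r_def using rk_herm[OF Rh] .
  have rp: "\<And>k. psd dB (r k)" unfolding r_def using rk_psd[OF R] .
  have tr: "mtrace (r k) = complex_of_real (p k) \<and> 0 \<le> p k" for k
    unfolding p_def using complex_nonneg_real[OF psd_trace_nonneg[OF rc rp]] .
  have psum: "(\<Sum>k<dA. p k) = 1"
  proof -
    have "(\<Sum>k<dA. p k) = Re (\<Sum>k<dA. mtrace (r k))" unfolding p_def by (simp add: Re_sum)
    also have "\<dots> = 1" unfolding r_def sum_trace_rk[OF u Rc] Rt by simp
    finally show ?thesis .
  qed
  obtain j where j: "j < dA" "p j > 0"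
  proof (rule ccontr)
    assume "\<not> thesis"
    then have "\<forall>k\<in>{..<dA}. p k = 0" using that tr by (metis lessThan_iff order_le_less)
    then have "(\<Sum>k<dA. p k) = 0" by simp
    then show False using psum by simp
  qed
  define \<chi> where "\<chi> k = (if p k > 0 then complex_of_real (1 / p k) \<cdot>\<^sub>m r k else complex_of_real (1 / p j) \<cdot>\<^sub>m r j)" for k
  have st: "is_state dB (\<chi> k)" for k
    unfolding \<chi>_def using scaled_state[OF rh rp] tr j by auto
  have pr: "complex_of_real (p k) \<cdot>\<^sub>m \<chi> k = r k" for k
  proof (cases "p k > 0")
    case True
    then show ?thesis unfolding \<chi>_def using smult_cancel_mat[OF _ rc] by simp
  next
    case False
    then have p0: "p k = 0" using tr[of k] by simp
    then have "r k = 0\<^sub>m dB dB" using psd_trace_zero[OF rh rp] tr[of k] by simp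
    moreover have "\<chi> k \<in> carrier_mat dB dB" unfolding \<chi>_def using rc by simp
    ultimately show ?thesis using p0 by (intro eq_matI) auto
  qed
  have eq: "proj_meas_A dA dB u \<rho> = msum ?N ?N (\<lambda>k. complex_of_real (p k) \<cdot>\<^sub>m tensor_mat (ket_bra (u k)) (\<chi> k)) {..<dA}"
    unfolding proj_def'
  proof (rule msum_cong)
    fix k assume k: "k \<in> {..<dA}"
    have "Qop dB u k * \<rho> * Qop dB u k = tensor_mat (ket_bra (u k)) (r k)"
      unfolding r_def using QrhoQ[OF onb_carrier[OF u] Rc] k by simp
    also have "\<dots> = complex_of_real (p k) \<cdot>\<^sub>m tensor_mat (ket_bra (u k)) (\<chi> k)"
      unfolding tensor_smult pr ..
    finally show "Qop dB u k * \<rho> * Qop dB u k = complex_of_real (p k) \<cdot>\<^sub>m tensor_mat (ket_bra (u k)) (\<chi> k)" .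
  qed
  show ?thesis unfolding cq_states_def eq using u tr psum st by blast
qed

lemma hs_nonneg: "X \<in> carrier_mat n n \<Longrightarrow> 0 \<le> hs_norm_sq X"
  using hs_frob frob_nonneg by metis

lemma unit_onb: "vec_onb n (\<lambda>l. unit_vec n l)"
  unfolding vec_onb_def
proof (intro conjI allI impI)
  fix l m assume l: "l < n" and m: "m < n"
  have "(unit_vec n l :: complex vec) \<bullet>c unit_vec n m = (\<Sum>i<n. (if i = l then 1 else 0) * cnj (if i = m then 1 else 0))"
    by (subst cscalar_expand[of _ n]) (auto simp: unit_vec_def intro!: sum.cong)
  also have "\<dots> = (\<Sum>i<n. if i = l then (if l = m then 1 else 0) else 0)"
    by (intro sum.cong refl) auto
  also have "\<dots> = (if l = m then 1 else 0)" using l by simp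
  finally show "(unit_vec n l :: complex vec) \<bullet>c unit_vec n m = (if l = m then 1 else 0)" .
qed auto

lemma cq_decomp: assumes "\<chi> \<in> cq_states dA dB"
  shows "\<exists>u. vec_onb dA u \<and> proj_meas_A dA dB u \<chi> = \<chi> \<and> \<chi> \<in> carrier_mat (dA*dB) (dA*dB)"
proof -
  obtain u p X where u: "vec_onb dA u" and X: "\<forall>k<dA. is_state dB (X k)"
    and chi: "\<chi> = msum (dA*dB) (dA*dB) (\<lambda>k. complex_of_real (p k) \<cdot>\<^sub>m tensor_mat (ket_bra (u k)) (X k)) {..<dA}"
    using assms unfolding cq_states_def by blast
  have Xc: "\<And>k. k < dA \<Longrightarrow> complex_of_real (p k) \<cdot>\<^sub>m X k \<in> carrier_mat dB dB"
    using X unfolding is_state_def hermitian_mat_def by auto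
  have chi2: "\<chi> = msum (dA*dB) (dA*dB) (\<lambda>k. tensor_mat (ket_bra (u k)) (complex_of_real (p k) \<cdot>\<^sub>m X k)) {..<dA}"
    unfolding chi tensor_smult ..
  have "proj_meas_A dA dB u \<chi> = \<chi>" unfolding chi2 by (rule proj_cq[OF u Xc])
  then show ?thesis using u chi by auto
qed

theorem mainTheorem6:
  fixes dA dB :: nat and \<rho> :: "complex mat"
    and As Bs :: "nat \<Rightarrow> complex mat"
  assumes "0 < dA" and "0 < dB"
    and "is_state (dA * dB) \<rho>"
    and "herm_onb dA As" and "herm_onb dB Bs"
  shows "geometric_discord_A dA dB \<rho> = discord12_A dA dB As Bs \<rho>"
proof -
  let ?N = "dA*dB"
  let ?P = "\<lambda>u. proj_meas_A dA dB u \<rho>"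
  have R: "is_state ?N \<rho>" by fact
  have Rc: "\<rho> \<in> carrier_mat ?N ?N" using R unfolding is_state_def hermitian_mat_def by auto
  have M12hs: "(M12 dA dB As Bs X)^2 = hs_norm_sq X" if "X \<in> carrier_mat ?N ?N" for X
    using M12_frob[OF assms(4,5) that] hs_frob[OF that] by simp
  define S where "S = {(M12 dA dB As Bs (?P u))^2 | u. vec_onb dA u}"
  define T where "T = {hs_norm_sq (\<rho> - \<chi>) | \<chi>. \<chi> \<in> cq_states dA dB}"
  have S_eq: "S = {hs_norm_sq (?P u) | u. vec_onb dA u}"
    unfolding S_def using M12hs[OF proj_carrier] by simp
  have disc: "discord12_A dA dB As Bs \<rho> = hs_norm_sq \<rho> - Sup S"
    unfolding discord12_A_def S_def M12hs[OF Rc] ..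
  have geo: "geometric_discord_A dA dB \<rho> = Inf T"
    unfolding geometric_discord_A_def T_def ..
  have pyth0': "hs_norm_sq (\<rho> - ?P u) = hs_norm_sq \<rho> - hs_norm_sq (?P u)" if u: "vec_onb dA u" for u
    using pyth0[OF u Rc] by simp
  have Sne: "S \<noteq> {}" unfolding S_eq using unit_onb by blast
  have Sbdd: "bdd_above S"
  proof (rule bdd_aboveI)
    fix s assume "s \<in> S"
    then obtain u where u: "vec_onb dA u" and s: "s = hs_norm_sq (?P u)" unfolding S_eq by blast
    show "s \<le> hs_norm_sq \<rho>" using pyth0[OF u Rc] hs_nonneg[OF minus_carrier_mat[OF proj_carrier]] s by simp
  qed
  have Tne: "T \<noteq> {}" unfolding T_def using proj_in_cq[OF unit_onb R] by blast
  have Tbdd: "bdd_below T"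
  proof (rule bdd_belowI)
    fix t assume "t \<in> T"
    then obtain \<chi> where "\<chi> \<in> cq_states dA dB" "t = hs_norm_sq (\<rho> - \<chi>)" unfolding T_def by blast
    then show "0 \<le> t" using cq_decomp hs_nonneg minus_carrier_mat by metis
  qed
  have le1: "hs_norm_sq \<rho> - Sup S \<le> Inf T"
  proof (rule cInf_greatest[OF Tne])
    fix t assume "t \<in> T"
    then obtain \<chi> where chi: "\<chi> \<in> cq_states dA dB" and t: "t = hs_norm_sq (\<rho> - \<chi>)" unfolding T_def by blast
    obtain u where u: "vec_onb dA u" and fx: "proj_meas_A dA dB u \<chi> = \<chi>" and cc: "\<chi> \<in> carrier_mat ?N ?N"
      using cq_decomp[OF chi] by blast
    have "t = hs_norm_sq (\<rho> - ?P u) + hs_norm_sq (?P u - \<chi>)" unfolding t using pyth[OF u Rc cc fx] .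
    moreover have "0 \<le> hs_norm_sq (?P u - \<chi>)" using hs_nonneg[OF minus_carrier_mat[OF cc]] .
    moreover have "hs_norm_sq (?P u) \<le> Sup S" using cSup_upper[OF _ Sbdd] u unfolding S_eq by blast
    ultimately show "hs_norm_sq \<rho> - Sup S \<le> t" using pyth0'[OF u] by linarith
  qed
  have le2: "Sup S \<le> hs_norm_sq \<rho> - Inf T"
  proof (rule cSup_least[OF Sne])
    fix s assume "s \<in> S"
    then obtain u where u: "vec_onb dA u" and s: "s = hs_norm_sq (?P u)" unfolding S_eq by blast
    have "hs_norm_sq (\<rho> - ?P u) \<in> T" unfolding T_def using proj_in_cq[OF u R] by blast
    then have "Inf T \<le> hs_norm_sq (\<rho> - ?P u)" using cInf_lower[OF _ Tbdd] by blast
    then show "s \<le> hs_norm_sq \<rho> - Inf T" using pyth0'[OF u] s by linarith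
  qed
  show ?thesis unfolding geo disc using le1 le2 by linarith
qed

end
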